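(* Assume the Setting, let $\tau>1$ and $\mu_0>0$ satisfy $1-\frac{1+\eta}{\tau}-\eta-\frac{\mu_0}{4\sigma}>0$, and let $\beta<\infty$. Let $y^{\delta_l}$ be noisy data with $\|y^{\delta_l}-y\|\le\delta_l$, $0<\delta_l\to0$, and let $\xi_n^{\delta_l},x_n^{\delta_l}$, $0\le n\le n_{\delta_l}$, be generated by Algorithm 1 with data $y^{\delta_l}$ (with stopping index $n_{\delta_l}$). Let $(\xi_n,x_n)$ be generated by Algorithm 2 with the same $\xi_0$, $\beta$, $\mu_0$, $\mu_1$ and the same step-size rule. Then for every finite integer $\hat n\le\liminf_{l\to\infty}n_{\delta_l}$ one has $\xi_n^{\delta_l}\to\xi_n$ and $x_n^{\delta_l}\to x_n$ as $l\to\infty$ for all $0\le n\le\hat n$.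
   Context: Setting. Let $X,Y$ be real Hilbert spaces. Let $\mathcal R:X\to(-\infty,\infty]$ be proper, lower semicontinuous and strongly convex with constant $\sigma>0$, i.e. $\mathcal R(t\bar x+(1-t)x)+\sigma t(1-t)\|\bar x-x\|^2\le t\mathcal R(\bar x)+(1-t)\mathcal R(x)$ for all $\bar x,x\in\mathrm{dom}(\mathcal R)$ and $t\in[0,1]$. For $\xi\in\partial\mathcal R(x)$ (subdifferential) the Bregman distance is $D_{\mathcal R}^{\xi}(z,x)=\mathcal R(z)-\mathcal R(x)-\langle\xi,z-x\rangle$. The convex conjugate $\mathcal R^*$ is differentiable with $\|\nabla\mathcal R^*(\bar\xi)-\nabla\mathcal R^*(\xi)\|\le\|\bar\xi-\xi\|/(2\sigma)$, and $\nabla\mathcal R^*(\xi)=\arg\min_{x\in X}\{\mathcal R(x)-\langle\xi,x\rangle\}$ (unique minimizer), with $\xi\in\partial\mathcal R(\nabla\mathcal R^*(\xi))$. Let $F:\mathrm{dom}(F)\subset X\to Y$ and $y\in Y$. Assume: (b) there are $\rho>0$, $x_0\in X$, $\xi_0\in\partial\mathcal R(x_0)$ with $B_{2\rho}(x_0):=\{x:\|x-x_0\|\le 2\rho\}\subset\mathrm{dom}(F)$, and $F(x)=y$ has a solution $\bar x$ with $D_{\mathcal R}^{\xi_0}(\bar x,x_0)\le\sigma\rho^2$; (c) $F$ is weakly closed: if $x_n\in\mathrm{dom}(F)$, $x_n\rightharpoonup x$ and $F(x_n)\to v$, then $x\in\mathrm{dom}(F)$ and $F(x)=v$; (d) there are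 bounded linear operators $L(x):X\to Y$, $x\in B_{2\rho}(x_0)$, with $x\mapsto L(x)$ continuous on $B_{2\rho}(x_0)$, a constant $\eta\in[0,1)$ with $\|F(x)-F(\bar x)-L(\bar x)(x-\bar x)\|\le\eta\|F(x)-F(\bar x)\|$ for all $x,\bar x\in B_{2\rho}(x_0)$, and a constant $L>0$ with $\|L(x)\|\le L$ on $B_{2\rho}(x_0)$. Algorithm 1 (noisy data $y^\delta$ with $\|y^\delta-y\|\le\delta$, $\delta>0$). Parameters: $\tau>1$, $\beta\in(0,\infty]$, $\mu_0>0$, $\mu_1>0$, and a fixed choice of one of two step-size rules: (constant) $\alpha_n^\delta=\mu_0/L^2$, or (adaptive) $\alpha_n^\delta=\min\{\mu_0\|r_n^\delta\|^2/\|g_n^\delta\|^2,\mu_1\}$ (with $\mu_0\|r_n^\delta\|^2/\|g_n^\delta\|^2:=+\infty$ if $g_n^\delta=0$). Set $\xi_{-1}^\delta=\xi_0^\delta=\xi_0$, $x_0^\delta=x_0=\nabla\mathcal R^*(\xi_0)$. For $n\ge0$: (i) $r_n^\delta:=F(x_n^\delta)-y^\delta$; if $\|r_n^\delta\|\le\tau\delta$, stop and output $x_n^\delta$ (the stopping index is denoted $n_\delta$; it is finite under the hypotheses of the claim). (ii) $g_n^\delta:=L(x_n^\delta)^*r_n^\delta$ and $\alpha_n^\delta$ by the chosen rule. (iii) $m_n^\delta:=\xi_n^\delta-\xi_{n-1}^\delta$; $\tilde\gamma_0^\delta:=0$ and for $n\ge1$, $\tilde\gamma_n^\delta:=\langle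 m_n^\delta,x_n^\delta-x_{n-1}^\delta\rangle-(1-\eta)\alpha_{n-1}^\delta\|r_{n-1}^\delta\|^2+(1+\eta)\alpha_{n-1}^\delta\delta\|r_{n-1}^\delta\|+\beta_{n-1}^\delta\tilde\gamma_{n-1}^\delta$. (iv) $\beta_n^\delta:=\min\{\max\{0,(\alpha_n^\delta\langle g_n^\delta,m_n^\delta\rangle-2\sigma\tilde\gamma_n^\delta)/\|m_n^\delta\|^2\},\beta\}$ if $m_n^\delta\ne0$, and $\beta_n^\delta:=0$ if $m_n^\delta=0$. (v) $\xi_{n+1}^\delta:=\xi_n^\delta-\alpha_n^\delta g_n^\delta+\beta_n^\delta m_n^\delta$, $x_{n+1}^\delta:=\nabla\mathcal R^*(\xi_{n+1}^\delta)$. Algorithm 2 (exact data $y$). Same parameters $\beta,\mu_0,\mu_1$ and same step-size rule type: (constant) $\alpha_n=\mu_0/L^2$, or (adaptive) $\alpha_n=\min\{\mu_0\|r_n\|^2/\|g_n\|^2,\mu_1\}$ if $r_n\ne0$ and $\alpha_n=0$ if $r_n=0$. Set $\xi_{-1}=\xi_0$, $x_0=\nabla\mathcal R^*(\xi_0)$. For all $n\ge0$ (no stopping): $r_n:=F(x_n)-y$, $g_n:=L(x_n)^*r_n$, $\alpha_n$ by the rule; $m_n:=\xi_n-\xi_{n-1}$; $\tilde\gamma_0:=0$ and for $n\ge1$, $\tilde\gamma_n:=\langle m_n,x_n-x_{n-1}\rangle-(1-\eta)\alpha_{n-1}\|r_{n-1}\|^2+\beta_{n-1}\tilde\gamma_{n-1}$;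 $\beta_n:=\min\{\max\{0,(\alpha_n\langle g_n,m_n\rangle-2\sigma\tilde\gamma_n)/\|m_n\|^2\},\beta\}$ if $m_n\ne0$ and $\beta_n:=0$ if $m_n=0$; $\xi_{n+1}:=\xi_n-\alpha_ng_n+\beta_nm_n$, $x_{n+1}:=\nabla\mathcal R^*(\xi_{n+1})$. *)

theory Defs
  imports "HOL-Analysis.Analysis"
begin

definition proper_fun :: "('a \<Rightarrow> ereal) \<Rightarrow> bool" where
  "proper_fun R \<longleftrightarrow> (\<forall>x. R x \<noteq> -\<infinity>) \<and> (\<exists>x. R x \<noteq> \<infinity>)"

definition lsc_fun :: "('a::topological_space \<Rightarrow> ereal) \<Rightarrow> bool" where
  "lsc_fun R \<longleftrightarrow> (\<forall>c. closed {x. R x \<le> c})"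

definition effdom :: "('a \<Rightarrow> ereal) \<Rightarrow> 'a set" where
  "effdom R = {x. R x < \<infinity>}"

definition strongly_convex_fun :: "('a::real_normed_vector \<Rightarrow> ereal) \<Rightarrow> real \<Rightarrow> bool" where
  "strongly_convex_fun R \<sigma> \<longleftrightarrow>
     (\<forall>xb\<in>effdom R. \<forall>x\<in>effdom R. \<forall>t\<in>{0..1::real}.
        R (t *\<^sub>R xb + (1 - t) *\<^sub>R x) + ereal (\<sigma> * t * (1 - t) * (norm (xb - x))\<^sup>2)
          \<le> ereal t * R xb + ereal (1 - t) * R x)"

definition subdiff :: "('a::real_inner \<Rightarrow> ereal) \<Rightarrow> 'a \<Rightarrow> 'a set" where
  "subdiff R x = {\<xi>. R x \<noteq> \<infinity> \<and> R x \<noteq> -\<infinity> \<and>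
                     (\<forall>z. R x + ereal (inner \<xi> (z - x)) \<le> R z)}"

definition bregman :: "('a::real_inner \<Rightarrow> ereal) \<Rightarrow> 'a \<Rightarrow> 'a \<Rightarrow> 'a \<Rightarrow> ereal" where
  "bregman R \<xi> z x = R z - R x - ereal (inner \<xi> (z - x))"

definition grad_conj :: "('a::real_inner \<Rightarrow> ereal) \<Rightarrow> 'a \<Rightarrow> 'a" where
  "grad_conj R \<xi> = (THE x. \<forall>z. R x - ereal (inner \<xi> x) \<le> R z - ereal (inner \<xi> z))"

definition weak_conv :: "(nat \<Rightarrow> 'a::real_inner) \<Rightarrow> 'a \<Rightarrow> bool" where
  "weak_conv X x \<longleftrightarrow> (\<forall>z. ((\<lambda>n. inner (X n) z) \<longlongrightarrow> inner x z) sequentially)"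

section \<open>The iteration (Algorithm 1 for delta > 0, Algorithm 2 for delta = 0)\<close>

text \<open>Parameters: R, F, Ladj (Ladj x = adjoint of L(x)), eta, sigma, Lc (the bound L),
  adaptive (True = adaptive step-size rule, False = constant rule), mu0, mu1, beta,
  delta, data yd, starting xi0.
  The state at index n is (xi_n, xi_{n-1}, gamma~_n); x_n = grad_conj R xi_n.\<close>

definition residual where
  "residual R F yd \<xi> = F (grad_conj R \<xi>) - yd"

definition stepsize :: "bool \<Rightarrow> real \<Rightarrow> real \<Rightarrow> real \<Rightarrow> 'b::real_normed_vector \<Rightarrow> 'a::real_normed_vector \<Rightarrow> real" where
  "stepsize adaptive Lc \<mu>0 \<mu>1 r g =
     (if adaptive then
        (if r = 0 then 0
         else if g = 0 then \<mu>1
         else min (\<mu>0 * (norm r)\<^sup>2 / (norm g)\<^sup>2) \<mu>1)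
      else \<mu>0 / Lc\<^sup>2)"

primrec iter ::
  "('a::real_inner \<Rightarrow> ereal) \<Rightarrow> ('a \<Rightarrow> 'b::real_inner) \<Rightarrow> ('a \<Rightarrow> 'b \<Rightarrow> 'a) \<Rightarrow>
   real \<Rightarrow> real \<Rightarrow> real \<Rightarrow> bool \<Rightarrow> real \<Rightarrow> real \<Rightarrow> real \<Rightarrow> real \<Rightarrow> 'b \<Rightarrow> 'a \<Rightarrow> nat \<Rightarrow> 'a \<times> 'a \<times> real"
where
  "iter R F Ladj \<eta> \<sigma> Lc adaptive \<mu>0 \<mu>1 \<beta> \<delta> yd \<xi>0 0 = (\<xi>0, \<xi>0, 0)"
| "iter R F Ladj \<eta> \<sigma> Lc adaptive \<mu>0 \<mu>1 \<beta> \<delta> yd \<xi>0 (Suc n) =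
     (let (\<xi>, \<xi>p, \<gamma>) = iter R F Ladj \<eta> \<sigma> Lc adaptive \<mu>0 \<mu>1 \<beta> \<delta> yd \<xi>0 n;
          x = grad_conj R \<xi>;
          r = F x - yd;
          g = Ladj x r;
          \<alpha> = stepsize adaptive Lc \<mu>0 \<mu>1 r g;
          m = \<xi> - \<xi>p;
          \<beta>n = (if m = 0 then 0
                 else min (max 0 ((\<alpha> * inner g m - 2 * \<sigma> * \<gamma>) / (norm m)\<^sup>2)) \<beta>);
          \<xi>' = \<xi> - \<alpha> *\<^sub>R g + \<beta>n *\<^sub>R m;
          \<gamma>' = inner (\<xi>' - \<xi>) (grad_conj R \<xi>' - x) - (1 - \<eta>) * \<alpha> * (norm r)\<^sup>2
               + (1 + \<eta>) * \<alpha> * \<delta> * norm r + \<beta>n * \<gamma>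
      in (\<xi>', \<xi>, \<gamma>'))"

definition xi_seq where
  "xi_seq R F Ladj \<eta> \<sigma> Lc adaptive \<mu>0 \<mu>1 \<beta> \<delta> yd \<xi>0 n =
     fst (iter R F Ladj \<eta> \<sigma> Lc adaptive \<mu>0 \<mu>1 \<beta> \<delta> yd \<xi>0 n)"

definition x_seq where
  "x_seq R F Ladj \<eta> \<sigma> Lc adaptive \<mu>0 \<mu>1 \<beta> \<delta> yd \<xi>0 n =
     grad_conj R (xi_seq R F Ladj \<eta> \<sigma> Lc adaptive \<mu>0 \<mu>1 \<beta> \<delta> yd \<xi>0 n)"

definition stop_index where
  "stop_index R F Ladj \<eta> \<sigma> Lc adaptive \<mu>0 \<mu>1 \<beta> \<tau> \<delta> yd \<xi>0 =
     (let P = (\<lambda>n. norm (F (x_seq R F Ladj \<eta> \<sigma> Lc adaptive \<mu>0 \<mu>1 \<beta> \<delta> yd \<xi>0 n) - yd) \<le> \<tau> * \<delta>)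
      in if (\<exists>n. P n) then enat (LEAST n. P n) else \<infinity>)"

end

theory Submission
  imports Defs
begin


locale RS =
  fixes R :: "'a::{real_inner,complete_space} \<Rightarrow> ereal" and sig :: real and x0 xi0 :: 'a
  assumes R_proper: "proper_fun R" and R_lsc: "lsc_fun R"
    and sig_pos: "sig > 0" and R_sc: "strongly_convex_fun R sig"
    and xi0_sub: "xi0 \<in> subdiff R x0"
begin

definition "Rr x = real_of_ereal (R x)"
definition "E = effdom R"

lemma notminf: "R x \<noteq> -\<infinity>" using R_proper unfolding proper_fun_def by auto

lemma fin: "x \<in> E \<Longrightarrow> R x = ereal (Rr x)"
  using notminf[of x] unfolding E_def effdom_def Rr_def by (cases "R x") auto

lemma inE: "R x \<le> ereal c \<Longrightarrow> x \<in> E"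
  unfolding E_def effdom_def by (cases "R x") auto

lemma sc_real:
  assumes "x \<in> E" "z \<in> E" "0 \<le> t" "t \<le> 1"
  shows "t *\<^sub>R z + (1 - t) *\<^sub>R x \<in> E"
    "Rr (t *\<^sub>R z + (1 - t) *\<^sub>R x) + sig * t * (1 - t) * (norm (z - x))\<^sup>2 \<le> t * Rr z + (1 - t) * Rr x"
proof -
  have "R (t *\<^sub>R z + (1 - t) *\<^sub>R x) + ereal (sig * t * (1 - t) * (norm (z - x))\<^sup>2)
          \<le> ereal t * R z + ereal (1 - t) * R x"
    using R_sc assms unfolding strongly_convex_fun_def E_def by auto
  also have "\<dots> = ereal (t * Rr z + (1 - t) * Rr x)" using fin[OF assms(1)] fin[OF assms(2)] by simp
  finally have *: "R (t *\<^sub>R z + (1 - t) *\<^sub>R x) + ereal (sig * t * (1 - t) * (norm (z - x))\<^sup>2)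
          \<le> ereal (t * Rr z + (1 - t) * Rr x)" .
  have "R (t *\<^sub>R z + (1 - t) *\<^sub>R x) \<le> ereal (t * Rr z + (1 - t) * Rr x - sig * t * (1 - t) * (norm (z - x))\<^sup>2)"
    using * notminf[of "t *\<^sub>R z + (1 - t) *\<^sub>R x"]
    by (cases "R (t *\<^sub>R z + (1 - t) *\<^sub>R x)") auto
  then show w: "t *\<^sub>R z + (1 - t) *\<^sub>R x \<in> E" by (rule inE)
  show "Rr (t *\<^sub>R z + (1 - t) *\<^sub>R x) + sig * t * (1 - t) * (norm (z - x))\<^sup>2 \<le> t * Rr z + (1 - t) * Rr x"
    using * fin[OF w] by simp
qed

lemma subdiff_iff: "\<xi> \<in> subdiff R x \<longleftrightarrow> x \<in> E \<and> (\<forall>z\<in>E. Rr x + inner \<xi> (z - x) \<le> Rr z)"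
proof
  assume a: "\<xi> \<in> subdiff R x"
  then have xE: "x \<in> E" unfolding subdiff_def E_def effdom_def by (auto simp: less_top)
  moreover have "\<forall>z\<in>E. Rr x + inner \<xi> (z - x) \<le> Rr z"
  proof
    fix z assume "z \<in> E"
    have "R x + ereal (inner \<xi> (z - x)) \<le> R z" using a unfolding subdiff_def by auto
    then show "Rr x + inner \<xi> (z - x) \<le> Rr z" using fin[OF xE] fin[OF \<open>z\<in>E\<close>] by simp
  qed
  ultimately show "x \<in> E \<and> (\<forall>z\<in>E. Rr x + inner \<xi> (z - x) \<le> Rr z)" by blast
next
  assume a: "x \<in> E \<and> (\<forall>z\<in>E. Rr x + inner \<xi> (z - x) \<le> Rr z)"
  show "\<xi> \<in> subdiff R x" unfolding subdiff_def
  proof (intro CollectI conjI allI)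
    show "R x \<noteq> \<infinity>" "R x \<noteq> -\<infinity>" using fin[of x] a by auto
    fix z show "R x + ereal (inner \<xi> (z - x)) \<le> R z"
    proof (cases "z \<in> E")
      case True then show ?thesis using a fin[of x] fin[of z] by simp
    next
      case False then have "R z = \<infinity>" unfolding E_def effdom_def by (simp add: top.not_eq_extremum)
      then show ?thesis by simp
    qed
  qed
qed

lemma x0E: "x0 \<in> E" using xi0_sub subdiff_iff by blast

lemma strong_subgrad:
  assumes "\<xi> \<in> subdiff R x" "z \<in> E"
  shows "Rr x + inner \<xi> (z - x) + sig * (norm (z - x))\<^sup>2 \<le> Rr z"
proof (rule ccontr)
  assume neg: "\<not> ?thesis"
  define K where "K = Rr z - Rr x - inner \<xi> (z - x)"
  define d where "d = sig * (norm (z - x))\<^sup>2"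
  have Kd: "K < d" using neg unfolding K_def d_def by linarith
  have xE: "x \<in> E" and sg: "\<And>w. w \<in> E \<Longrightarrow> Rr x + inner \<xi> (w - x) \<le> Rr w"
    using assms(1) subdiff_iff by auto
  have K0: "0 \<le> K" using sg[OF assms(2)] unfolding K_def by linarith
  then have dpos: "d > 0" using Kd by linarith
  define t where "t = min 1 ((d - K) / (2 * d))"
  have t0: "0 < t" "t \<le> 1" unfolding t_def using Kd dpos by auto
  have "t \<le> (d - K) / (2 * d)" unfolding t_def by simp
  then have "t * (2 * d) \<le> d - K" using dpos by (simp add: le_divide_eq)
  then have tle: "t * d \<le> (d - K) / 2" by simp
  define w where "w = t *\<^sub>R z + (1 - t) *\<^sub>R x"
  have wE: "w \<in> E" using sc_real(1)[OF xE assms(2)] t0 unfolding w_def by auto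
  have sc: "Rr w + sig * t * (1 - t) * (norm (z - x))\<^sup>2 \<le> t * Rr z + (1 - t) * Rr x"
    using sc_real(2)[OF xE assms(2)] t0 unfolding w_def by auto
  have e1: "sig * t * (1 - t) * (norm (z - x))\<^sup>2 = t * d - t * (t * d)" unfolding d_def by (simp add: algebra_simps)
  have e2: "(1 - t) * Rr x = Rr x - t * Rr x" by (simp add: algebra_simps)
  have "w - x = t *\<^sub>R (z - x)" unfolding w_def by (simp add: algebra_simps)
  then have "Rr x + t * inner \<xi> (z - x) \<le> Rr w" using sg[OF wE] by simp
  with sc e1 e2 have "t * inner \<xi> (z - x) + t * d - t * (t * d) \<le> t * Rr z - t * Rr x" by linarith
  then have "t * (inner \<xi> (z - x) + d - t * d) \<le> t * (Rr z - Rr x)" by (simp add: algebra_simps)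
  then have "inner \<xi> (z - x) + d - t * d \<le> Rr z - Rr x" using t0 by simp
  then have h1: "d - t * d \<le> K" unfolding K_def by (simp add: algebra_simps)
  have h2: "d - K \<le> t * d" using h1 by linarith
  have h3: "d - K \<le> (d - K) / 2" using h2 tle by linarith
  have h4: "d - K \<le> 0" using h3 by (simp add: field_simps)
  show False using h4 Kd by simp
qed

lemma midpoint:
  assumes "a \<in> E" "b \<in> E"
  shows "(1/2) *\<^sub>R a + (1/2) *\<^sub>R b \<in> E"
    "2 * Rr ((1/2) *\<^sub>R a + (1/2) *\<^sub>R b) - 2 * inner \<xi> ((1/2) *\<^sub>R a + (1/2) *\<^sub>R b) + sig / 2 * (norm (a - b))\<^sup>2
      \<le> Rr a - inner \<xi> a + Rr b - inner \<xi> b"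
proof -
  show "(1/2) *\<^sub>R a + (1/2) *\<^sub>R b \<in> E" using sc_real(1)[OF assms(2) assms(1), of "1/2"] by simp
  have "Rr ((1/2) *\<^sub>R a + (1/2) *\<^sub>R b) + sig * (1/2) * (1 - 1/2) * (norm (a - b))\<^sup>2 \<le> (1/2) * Rr a + (1 - 1/2) * Rr b"
    using sc_real(2)[OF assms(2) assms(1), of "1/2"] by simp
  moreover have "inner \<xi> ((1/2) *\<^sub>R a + (1/2) *\<^sub>R b) = (inner \<xi> a + inner \<xi> b) / 2"
    by (simp add: inner_add_right)
  ultimately show "2 * Rr ((1/2) *\<^sub>R a + (1/2) *\<^sub>R b) - 2 * inner \<xi> ((1/2) *\<^sub>R a + (1/2) *\<^sub>R b) + sig / 2 * (norm (a - b))\<^sup>2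
      \<le> Rr a - inner \<xi> a + Rr b - inner \<xi> b" by (simp add: field_simps)
qed

lemma lower_bound:
  assumes "z \<in> E"
  shows "Rr x0 - inner \<xi> x0 - (norm (xi0 - \<xi>))\<^sup>2 / (4 * sig) \<le> Rr z - inner \<xi> z"
proof -
  have "Rr x0 + inner xi0 (z - x0) + sig * (norm (z - x0))\<^sup>2 \<le> Rr z"
    using strong_subgrad[OF xi0_sub assms] .
  moreover have "inner (xi0 - \<xi>) (z - x0) \<ge> - (norm (xi0 - \<xi>) * norm (z - x0))"
    using Cauchy_Schwarz_ineq2[of "xi0 - \<xi>" "z - x0"] by (simp add: abs_le_iff)
  moreover have "norm (xi0 - \<xi>) * norm (z - x0) \<le> (norm (xi0 - \<xi>))\<^sup>2 / (4 * sig) + sig * (norm (z - x0))\<^sup>2"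
  proof -
    have "0 \<le> (norm (xi0 - \<xi>) - 2 * sig * norm (z - x0))\<^sup>2" by simp
    then have "4 * sig * (norm (xi0 - \<xi>) * norm (z - x0)) \<le> (norm (xi0 - \<xi>))\<^sup>2 + 4 * sig * (sig * (norm (z - x0))\<^sup>2)"
      by (simp add: power2_eq_square algebra_simps)
    then show ?thesis using sig_pos by (simp add: field_simps)
  qed
  moreover have "inner (xi0 - \<xi>) (z - x0) = inner xi0 (z - x0) - inner \<xi> z + inner \<xi> x0"
    by (simp add: inner_diff_left inner_diff_right)
  ultimately show ?thesis by linarith
qed

definition "ismin \<xi> x \<longleftrightarrow> (\<forall>z. R x - ereal (inner \<xi> x) \<le> R z - ereal (inner \<xi> z))"

lemma ismin_iff_subdiff: "ismin \<xi> x \<longleftrightarrow> \<xi> \<in> subdiff R x"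
proof
  assume a: "ismin \<xi> x"
  have "R x - ereal (inner \<xi> x) \<le> R x0 - ereal (inner \<xi> x0)" using a unfolding ismin_def by blast
  also have "\<dots> = ereal (Rr x0 - inner \<xi> x0)" using fin[OF x0E] by simp
  finally have "R x \<le> ereal (Rr x0 - inner \<xi> x0 + inner \<xi> x)"
    using notminf[of x] by (cases "R x") auto
  then have xE: "x \<in> E" by (rule inE)
  show "\<xi> \<in> subdiff R x" unfolding subdiff_iff
  proof (intro conjI ballI xE)
    fix z assume zE: "z \<in> E"
    have "R x - ereal (inner \<xi> x) \<le> R z - ereal (inner \<xi> z)" using a unfolding ismin_def by blast
    then have "Rr x - inner \<xi> x \<le> Rr z - inner \<xi> z" using fin[OF xE] fin[OF zE] by simp
    then show "Rr x + inner \<xi> (z - x) \<le> Rr z" by (simp add: inner_diff_right)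
  qed
next
  assume a: "\<xi> \<in> subdiff R x"
  then have xE: "x \<in> E" and sg: "\<And>z. z \<in> E \<Longrightarrow> Rr x + inner \<xi> (z - x) \<le> Rr z"
    using subdiff_iff by auto
  show "ismin \<xi> x" unfolding ismin_def
  proof
    fix z show "R x - ereal (inner \<xi> x) \<le> R z - ereal (inner \<xi> z)"
    proof (cases "z \<in> E")
      case True
      then show ?thesis using sg[OF True] fin[OF xE] fin[OF True] by (simp add: inner_diff_right)
    next
      case False then have "R z = \<infinity>" unfolding E_def effdom_def by (simp add: top.not_eq_extremum)
      then show ?thesis by simp
    qed
  qed
qed

lemma exists_min: "\<exists>x. ismin \<xi> x"
proof -
  define h where "h z = Rr z - inner \<xi> z" for z
  define B where "B = Rr x0 - inner \<xi> x0 - (norm (xi0 - \<xi>))\<^sup>2 / (4 * sig)"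
  have hB: "\<And>z. z \<in> E \<Longrightarrow> B \<le> h z" unfolding h_def B_def using lower_bound by blast
  define m where "m = Inf (h ` E)"
  have bdd: "bdd_below (h ` E)" using hB by (rule bdd_belowI2)
  have ne: "h ` E \<noteq> {}" using x0E by auto
  have mle: "\<And>z. z \<in> E \<Longrightarrow> m \<le> h z" unfolding m_def using bdd by (simp add: cInf_lower)
  have "\<forall>k::nat. \<exists>z. z \<in> E \<and> h z < m + 1 / (real k + 1)"
  proof
    fix k :: nat
    have "Inf (h ` E) < m + 1 / (real k + 1)" unfolding m_def by simp
    then obtain v where "v \<in> h ` E" "v < m + 1 / (real k + 1)" using cInf_lessD[OF ne] by blast
    then show "\<exists>z. z \<in> E \<and> h z < m + 1 / (real k + 1)" by auto
  qed
  then obtain zs where zsE: "\<And>k. zs k \<in> E" and zsm: "\<And>k. h (zs k) < m + 1 / (real k + 1)" by metis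
  have dist_bd: "sig / 4 * (norm (zs j - zs k))\<^sup>2 \<le> 1 / (real M + 1)" if "M \<le> j" "M \<le> k" for j k M
  proof -
    let ?w = "(1/2) *\<^sub>R zs j + (1/2) *\<^sub>R zs k"
    have "2 * h ?w + sig / 2 * (norm (zs j - zs k))\<^sup>2 \<le> h (zs j) + h (zs k)"
      using midpoint(2)[OF zsE[of j] zsE[of k], of \<xi>] unfolding h_def by (simp add: algebra_simps)
    moreover have "m \<le> h ?w" using mle midpoint(1)[OF zsE[of j] zsE[of k]] by blast
    moreover have "1 / (real j + 1) \<le> 1 / (real M + 1)" "1 / (real k + 1) \<le> 1 / (real M + 1)"
      using that by (auto simp: frac_le)
    ultimately have "2 * m + sig / 2 * (norm (zs j - zs k))\<^sup>2 \<le> 2 * m + 2 / (real M + 1)"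
      using zsm[of j] zsm[of k] by linarith
    then show ?thesis by simp
  qed
  have "Cauchy zs"
  proof (rule metric_CauchyI)
    fix e :: real assume e: "e > 0"
    obtain M :: nat where M: "4 / (sig * e\<^sup>2) < real M + 1"
      using reals_Archimedean2[of "4 / (sig * e\<^sup>2)"] by (smt (verit) of_nat_0_le_iff)
    have "dist (zs j) (zs k) < e" if "M \<le> j" "M \<le> k" for j k
    proof -
      have a: "sig / 4 * (norm (zs j - zs k))\<^sup>2 \<le> 1 / (real M + 1)" using dist_bd that .
      have "1 / (real M + 1) < sig * e\<^sup>2 / 4"
        using M e sig_pos by (simp add: field_simps)
      with a have "sig * (norm (zs j - zs k))\<^sup>2 < sig * e\<^sup>2" by simp
      then have "(norm (zs j - zs k))\<^sup>2 < e\<^sup>2" using sig_pos by simp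
      then show ?thesis using e by (simp add: dist_norm power_less_imp_less_base)
    qed
    then show "\<exists>M. \<forall>m\<ge>M. \<forall>n\<ge>M. dist (zs m) (zs n) < e" by blast
  qed
  then obtain xs where lim: "zs \<longlonglongrightarrow> xs" using Cauchy_convergent convergent_def by blast
  have bound: "R xs \<le> ereal (m + inner \<xi> xs + \<epsilon>)" if eps: "\<epsilon> > 0" for \<epsilon>
  proof -
    have cl: "closed {x. R x \<le> ereal (m + inner \<xi> xs + \<epsilon>)}" using R_lsc unfolding lsc_fun_def by blast
    have t0: "(\<lambda>k. 1 / (real k + 1)) \<longlonglongrightarrow> 0"
      using LIMSEQ_inverse_real_of_nat by (simp add: inverse_eq_divide add.commute)
    have t1: "(\<lambda>k. 1 / (real k + 1) + inner \<xi> (zs k)) \<longlonglongrightarrow> 0 + inner \<xi> xs"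
      by (intro tendsto_intros lim t0)
    have "eventually (\<lambda>k. 1 / (real k + 1) + inner \<xi> (zs k) < inner \<xi> xs + \<epsilon>) sequentially"
      using order_tendstoD(2)[OF t1, of "inner \<xi> xs + \<epsilon>"] eps by simp
    then have "eventually (\<lambda>k. zs k \<in> {x. R x \<le> ereal (m + inner \<xi> xs + \<epsilon>)}) sequentially"
    proof (rule eventually_mono)
      fix k assume a: "1 / (real k + 1) + inner \<xi> (zs k) < inner \<xi> xs + \<epsilon>"
      have "Rr (zs k) < m + 1 / (real k + 1) + inner \<xi> (zs k)" using zsm[of k] unfolding h_def by linarith
      then have "Rr (zs k) \<le> m + inner \<xi> xs + \<epsilon>" using a by linarith
      then show "zs k \<in> {x. R x \<le> ereal (m + inner \<xi> xs + \<epsilon>)}" using fin[OF zsE[of k]] by simp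
    qed
    from Lim_in_closed_set[OF cl this _ lim] show ?thesis by simp
  qed
  then have xsE: "xs \<in> E" using inE[of xs "m + inner \<xi> xs + 1"] by simp
  have "Rr xs \<le> m + inner \<xi> xs + \<epsilon>" if "\<epsilon> > 0" for \<epsilon>
    using bound[OF that] fin[OF xsE] by simp
  then have "Rr xs \<le> m + inner \<xi> xs" by (rule field_le_epsilon)
  then have hxs: "h xs \<le> m" unfolding h_def by simp
  have "\<xi> \<in> subdiff R xs" unfolding subdiff_iff
  proof (intro conjI ballI xsE)
    fix z assume "z \<in> E"
    then have "h xs \<le> h z" using mle hxs by (meson order.trans)
    then show "Rr xs + inner \<xi> (z - xs) \<le> Rr z" unfolding h_def by (simp add: inner_diff_right)
  qed
  then show ?thesis using ismin_iff_subdiff by blast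
qed

lemma unique_min: assumes "ismin \<xi> a" "ismin \<xi> b" shows "a = b"
proof (rule ccontr)
  assume ne: "a \<noteq> b"
  have aE: "a \<in> E" and sa: "\<And>z. z \<in> E \<Longrightarrow> Rr a + inner \<xi> (z - a) \<le> Rr z"
    using assms(1) ismin_iff_subdiff subdiff_iff by auto
  have bE: "b \<in> E" and sb: "\<And>z. z \<in> E \<Longrightarrow> Rr b + inner \<xi> (z - b) \<le> Rr z"
    using assms(2) ismin_iff_subdiff subdiff_iff by auto
  let ?w = "(1/2) *\<^sub>R a + (1/2) *\<^sub>R b"
  have 1: "2 * Rr ?w - 2 * inner \<xi> ?w + sig / 2 * (norm (a - b))\<^sup>2 \<le> Rr a - inner \<xi> a + Rr b - inner \<xi> b"
    using midpoint(2)[OF aE bE] .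
  have 2: "Rr a - inner \<xi> a \<le> Rr ?w - inner \<xi> ?w" using sa[OF midpoint(1)[OF aE bE]] by (simp add: inner_diff_right)
  have 3: "Rr a - inner \<xi> a \<le> Rr b - inner \<xi> b" using sa[OF bE] by (simp add: inner_diff_right)
  have 4: "Rr b - inner \<xi> b \<le> Rr a - inner \<xi> a" using sb[OF aE] by (simp add: inner_diff_right)
  have "sig / 2 * (norm (a - b))\<^sup>2 \<le> 0" using 1 2 3 4 by linarith
  moreover have "sig / 2 * (norm (a - b))\<^sup>2 > 0" using ne sig_pos by simp
  ultimately show False by linarith
qed

definition "Phi = grad_conj R"

lemma Phi_ismin: "ismin \<xi> (Phi \<xi>)"
proof -
  obtain x where x: "ismin \<xi> x" using exists_min by blast
  have e: "grad_conj R \<xi> = (THE x. ismin \<xi> x)" unfolding grad_conj_def ismin_def by (rule refl)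
  have "(THE x. ismin \<xi> x) = x" by (rule the_equality[where P="ismin \<xi>", OF x]) (rule unique_min[OF _ x])
  then have "grad_conj R \<xi> = x" using e by simp
  then show ?thesis using x unfolding Phi_def by simp
qed

lemma Phi_sub: "\<xi> \<in> subdiff R (Phi \<xi>)" using Phi_ismin ismin_iff_subdiff by blast
lemma Phi_E: "Phi \<xi> \<in> E" using Phi_sub subdiff_iff by blast
lemma Phi_eq: "\<xi> \<in> subdiff R x \<Longrightarrow> Phi \<xi> = x"
  using unique_min Phi_ismin ismin_iff_subdiff by blast

lemma Phi_mono: "inner (\<xi> - \<zeta>) (Phi \<xi> - Phi \<zeta>) \<ge> 2 * sig * (norm (Phi \<xi> - Phi \<zeta>))\<^sup>2"
proof -
  have 1: "Rr (Phi \<xi>) + inner \<xi> (Phi \<zeta> - Phi \<xi>) + sig * (norm (Phi \<zeta> - Phi \<xi>))\<^sup>2 \<le> Rr (Phi \<zeta>)"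
    using strong_subgrad[OF Phi_sub Phi_E] .
  have 2: "Rr (Phi \<zeta>) + inner \<zeta> (Phi \<xi> - Phi \<zeta>) + sig * (norm (Phi \<xi> - Phi \<zeta>))\<^sup>2 \<le> Rr (Phi \<xi>)"
    using strong_subgrad[OF Phi_sub Phi_E] .
  have 3: "(norm (Phi \<zeta> - Phi \<xi>))\<^sup>2 = (norm (Phi \<xi> - Phi \<zeta>))\<^sup>2" by (simp add: norm_minus_commute)
  have 4: "inner (\<xi> - \<zeta>) (Phi \<xi> - Phi \<zeta>) = - inner \<xi> (Phi \<zeta> - Phi \<xi>) - inner \<zeta> (Phi \<xi> - Phi \<zeta>)"
    by (simp add: inner_diff_left inner_diff_right)
  have lin: "\<And>a b p q s::real. a + p + s \<le> b \<Longrightarrow> b + q + s \<le> a \<Longrightarrow> s + s \<le> - p - q" by linarith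
  have "sig * (norm (Phi \<xi> - Phi \<zeta>))\<^sup>2 + sig * (norm (Phi \<xi> - Phi \<zeta>))\<^sup>2 \<le> inner (\<xi> - \<zeta>) (Phi \<xi> - Phi \<zeta>)"
    unfolding 4 by (rule lin[OF 1[unfolded 3] 2])
  then show ?thesis by simp
qed

lemma Phi_lip: "norm (Phi \<xi> - Phi \<zeta>) \<le> norm (\<xi> - \<zeta>) / (2 * sig)"
proof -
  have "2 * sig * (norm (Phi \<xi> - Phi \<zeta>))\<^sup>2 \<le> norm (\<xi> - \<zeta>) * norm (Phi \<xi> - Phi \<zeta>)"
    using Phi_mono[of \<xi> \<zeta>] norm_cauchy_schwarz[of "\<xi> - \<zeta>" "Phi \<xi> - Phi \<zeta>"] by linarith
  then have "norm (Phi \<xi> - Phi \<zeta>) * (2 * sig * norm (Phi \<xi> - Phi \<zeta>)) \<le> norm (Phi \<xi> - Phi \<zeta>) * norm (\<xi> - \<zeta>)"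
    by (simp add: power2_eq_square algebra_simps)
  then have "norm (Phi \<xi> - Phi \<zeta>) = 0 \<or> 2 * sig * norm (Phi \<xi> - Phi \<zeta>) \<le> norm (\<xi> - \<zeta>)"
    by (metis mult_le_cancel_left_pos norm_ge_zero order_le_less)
  then show ?thesis using sig_pos by (auto simp: field_simps)
qed

end



lemma amgm: "(s::real) > 0 \<Longrightarrow> a * b \<le> a\<^sup>2 / (4 * s) + s * b\<^sup>2"
proof -
  assume s: "s > 0"
  have "0 \<le> (a - 2 * s * b)\<^sup>2" by simp
  then have "4 * s * (a * b) \<le> a\<^sup>2 + 4 * s * (s * b\<^sup>2)"
    by (simp add: power2_eq_square algebra_simps)
  then show ?thesis using s by (simp add: field_simps)
qed

lemma beta_lemma:
  fixes g m :: "'a::real_inner"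
  assumes s: "s > 0" and B: "B \<ge> 0"
    and b: "b = (if m = 0 then 0 else min (max 0 ((al * inner g m - 2 * s * ga) / (norm m)\<^sup>2)) B)"
  shows "0 \<le> b" "b \<le> B"
    "(norm ((- al) *\<^sub>R g + b *\<^sub>R m))\<^sup>2 / (4 * s) + b * ga \<le> al * al * (norm g)\<^sup>2 / (4 * s)"
proof -
  show "0 \<le> b" "b \<le> B" using b B by auto
  have key: "2 * s * (b * ga) \<le> b * (al * inner g m) - b * b * (norm m)\<^sup>2"
  proof (cases "b = 0")
    case True then show ?thesis by simp
  next
    case False
    then have m0: "m \<noteq> 0" using b by auto
    have bpos: "b > 0" using \<open>0 \<le> b\<close> False by simp
    have "b \<le> max 0 ((al * inner g m - 2 * s * ga) / (norm m)\<^sup>2)" using b m0 by simp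
    then have "b \<le> (al * inner g m - 2 * s * ga) / (norm m)\<^sup>2" using bpos by linarith
    then have "b * (norm m)\<^sup>2 \<le> al * inner g m - 2 * s * ga" using m0 by (simp add: le_divide_eq)
    then have "b * (b * (norm m)\<^sup>2) \<le> b * (al * inner g m - 2 * s * ga)" using bpos by simp
    then show ?thesis by (simp add: algebra_simps)
  qed
  have ex: "(norm ((- al) *\<^sub>R g + b *\<^sub>R m))\<^sup>2 = al * al * (norm g)\<^sup>2 - 2 * (b * (al * inner g m)) + b * b * (norm m)\<^sup>2"
    by (simp add: power2_norm_eq_inner inner_add_left inner_add_right algebra_simps inner_commute)
  have "(norm ((- al) *\<^sub>R g + b *\<^sub>R m))\<^sup>2 + 4 * s * (b * ga) \<le> al * al * (norm g)\<^sup>2"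
  proof -
    have "0 \<le> b * b * (norm m)\<^sup>2" by simp
    then show ?thesis unfolding ex using key by linarith
  qed
  then have "((norm ((- al) *\<^sub>R g + b *\<^sub>R m))\<^sup>2 + 4 * s * (b * ga)) / (4 * s) \<le> al * al * (norm g)\<^sup>2 / (4 * s)"
    using s by (simp add: divide_right_mono)
  then show "(norm ((- al) *\<^sub>R g + b *\<^sub>R m))\<^sup>2 / (4 * s) + b * ga \<le> al * al * (norm g)\<^sup>2 / (4 * s)"
    using s by (simp add: add_divide_distrib)
qed

locale Alg = RS R sig x0 xi0
  for R :: "'a::{real_inner,complete_space} \<Rightarrow> ereal" and sig x0 xi0 +
  fixes F :: "'a \<Rightarrow> 'b::{real_inner,complete_space}"
    and L :: "'a \<Rightarrow> ('a \<Rightarrow>\<^sub>L 'b)" and Ladj :: "'a \<Rightarrow> 'b \<Rightarrow> 'a"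
    and eta Lc mu0 mu1 bet tau rho :: real and ad :: bool and y :: 'b and xb :: 'a
  assumes rho_pos: "rho > 0"
    and xbar_sol: "F xb = y"
    and xbar_breg: "bregman R xi0 xb x0 \<le> ereal (sig * rho\<^sup>2)"
    and L_cont: "continuous_on (cball x0 (2 * rho)) L"
    and Ladj_adj: "\<And>x v w. inner (blinfun_apply (L x) v) w = inner v (Ladj x w)"
    and eta: "0 \<le> eta" "eta < 1"
    and tcc: "\<And>x x'. x \<in> cball x0 (2 * rho) \<Longrightarrow> x' \<in> cball x0 (2 * rho) \<Longrightarrow>
              norm (F x - F x' - blinfun_apply (L x') (x - x')) \<le> eta * norm (F x - F x')"
    and Lc_pos: "Lc > 0" and L_bound: "\<And>x. x \<in> cball x0 (2 * rho) \<Longrightarrow> norm (L x) \<le> Lc"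
    and tau: "tau > 1" and mu0: "mu0 > 0" and mu1: "mu1 > 0" and bet: "bet > 0"
    and cond: "1 - (1 + eta) / tau - eta - mu0 / (4 * sig) > 0"
begin

abbreviation "B \<equiv> cball x0 (2 * rho)"

definition "st d yd n = iter R F Ladj eta sig Lc ad mu0 mu1 bet d yd xi0 n"
definition "XI d yd n = fst (st d yd n)"
definition "XP d yd n = fst (snd (st d yd n))"
definition "GA d yd n = snd (snd (st d yd n))"
definition "XX d yd n = Phi (XI d yd n)"
definition "RR d yd n = F (XX d yd n) - yd"
definition "GG d yd n = Ladj (XX d yd n) (RR d yd n)"
definition "AL d yd n = stepsize ad Lc mu0 mu1 (RR d yd n) (GG d yd n)"
definition "MM d yd n = XI d yd n - XP d yd n"
definition "BE d yd n = (if MM d yd n = 0 then 0 else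
   min (max 0 ((AL d yd n * inner (GG d yd n) (MM d yd n) - 2 * sig * GA d yd n) / (norm (MM d yd n))\<^sup>2)) bet)"

lemma st_Suc: "st d yd (Suc n) =
   (XI d yd n - AL d yd n *\<^sub>R GG d yd n + BE d yd n *\<^sub>R MM d yd n, XI d yd n,
    inner ((XI d yd n - AL d yd n *\<^sub>R GG d yd n + BE d yd n *\<^sub>R MM d yd n) - XI d yd n)
          (Phi (XI d yd n - AL d yd n *\<^sub>R GG d yd n + BE d yd n *\<^sub>R MM d yd n) - XX d yd n)
     - (1 - eta) * AL d yd n * (norm (RR d yd n))\<^sup>2 + (1 + eta) * AL d yd n * d * norm (RR d yd n)
     + BE d yd n * GA d yd n)"
proof -
  obtain a b c where abc: "st d yd n = (a, b, c)" by (cases "st d yd n") auto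
  show ?thesis
    using abc unfolding st_def XI_def XP_def GA_def XX_def RR_def GG_def AL_def MM_def BE_def Phi_def
    by (simp add: Let_def)
qed

lemma XI_Suc: "XI d yd (Suc n) = XI d yd n - AL d yd n *\<^sub>R GG d yd n + BE d yd n *\<^sub>R MM d yd n"
  unfolding XI_def[of d yd "Suc n"] st_Suc by simp
lemma XP_Suc: "XP d yd (Suc n) = XI d yd n"
  unfolding XP_def[of d yd "Suc n"] st_Suc by simp
lemma GA_Suc: "GA d yd (Suc n) = inner (MM d yd (Suc n)) (XX d yd (Suc n) - XX d yd n)
     - (1 - eta) * AL d yd n * (norm (RR d yd n))\<^sup>2 + (1 + eta) * AL d yd n * d * norm (RR d yd n)
     + BE d yd n * GA d yd n"
  unfolding GA_def[of d yd "Suc n"] st_Suc MM_def[of d yd "Suc n"] XX_def[of d yd "Suc n"] XP_Suc XI_Suc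
  by simp
lemma MM_Suc: "MM d yd (Suc n) = (- AL d yd n) *\<^sub>R GG d yd n + BE d yd n *\<^sub>R MM d yd n"
  unfolding MM_def[of d yd "Suc n"] XP_Suc XI_Suc by simp

lemma XI_0: "XI d yd 0 = xi0" and XP_0: "XP d yd 0 = xi0" and GA_0: "GA d yd 0 = 0"
  unfolding XI_def XP_def GA_def st_def by simp_all
lemma MM_0: "MM d yd 0 = 0" unfolding MM_def XI_0 XP_0 by simp
lemma XX_0: "XX d yd 0 = x0" unfolding XX_def XI_0 by (rule Phi_eq[OF xi0_sub])

end



context Alg begin

definition "Dr \<xi> z x = Rr z - Rr x - inner \<xi> (z - x)"

lemma Dr_lower: "\<xi> \<in> subdiff R x \<Longrightarrow> z \<in> E \<Longrightarrow> sig * (norm (z - x))\<^sup>2 \<le> Dr \<xi> z x"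
  using strong_subgrad[of \<xi> x z] unfolding Dr_def by linarith

lemma Dr_step:
  assumes zE: "z \<in> E"
  shows "Dr \<xi>' z (Phi \<xi>') \<le> Dr \<xi> z (Phi \<xi>) + (norm (\<xi>' - \<xi>))\<^sup>2 / (4 * sig) + inner (\<xi>' - \<xi>) (Phi \<xi> - z)"
proof -
  let ?x = "Phi \<xi>" and ?x' = "Phi \<xi>'"
  have 1: "Rr ?x + inner \<xi> (?x' - ?x) + sig * (norm (?x' - ?x))\<^sup>2 \<le> Rr ?x'"
    using strong_subgrad[OF Phi_sub Phi_E] .
  have 2: "inner (\<xi>' - \<xi>) (?x' - ?x) \<le> norm (\<xi>' - \<xi>) * norm (?x' - ?x)" by (rule norm_cauchy_schwarz)
  have 3: "norm (\<xi>' - \<xi>) * norm (?x' - ?x) \<le> (norm (\<xi>' - \<xi>))\<^sup>2 / (4 * sig) + sig * (norm (?x' - ?x))\<^sup>2"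
    using amgm[OF sig_pos] .
  have 4: "Dr \<xi>' z ?x' - Dr \<xi> z ?x - inner (\<xi>' - \<xi>) (?x - z) =
      Rr ?x - Rr ?x' + inner \<xi> (?x' - ?x) + inner (\<xi>' - \<xi>) (?x' - ?x)"
    unfolding Dr_def by (simp add: inner_diff_left inner_diff_right)
  show ?thesis using 1 2 3 4 by linarith
qed

lemma xb_E: "xb \<in> E" and Dr0: "Dr xi0 xb x0 \<le> sig * rho\<^sup>2"
proof -
  have "R xb - R x0 - ereal (inner xi0 (xb - x0)) \<le> ereal (sig * rho\<^sup>2)"
    using xbar_breg unfolding bregman_def .
  then have "R xb - ereal (Rr x0) - ereal (inner xi0 (xb - x0)) \<le> ereal (sig * rho\<^sup>2)"
    using fin[OF x0E] by simp
  then have a: "R xb \<le> ereal (sig * rho\<^sup>2 + Rr x0 + inner xi0 (xb - x0))"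
    using notminf[of xb] by (cases "R xb") auto
  then show "xb \<in> E" by (rule inE)
  then show "Dr xi0 xb x0 \<le> sig * rho\<^sup>2" using a fin[of xb] unfolding Dr_def by simp
qed

lemma xb_near: "norm (xb - x0) \<le> rho"
proof -
  have "sig * (norm (xb - x0))\<^sup>2 \<le> sig * rho\<^sup>2" using Dr_lower[OF xi0_sub xb_E] Dr0 by linarith
  then have "(norm (xb - x0))\<^sup>2 \<le> rho\<^sup>2" using sig_pos by simp
  then show ?thesis using rho_pos by (simp add: power2_le_iff_abs_le)
qed

lemma xb_B: "xb \<in> B" using xb_near rho_pos by (simp add: dist_norm norm_minus_commute)

lemma Ladj_zero: "Ladj x 0 = 0"
proof -
  have "inner (Ladj x 0) (Ladj x 0) = 0" using Ladj_adj[of x "Ladj x 0" 0] by simp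
  then show ?thesis by simp
qed

lemma adj_norm: "norm (Ladj x w) \<le> norm (L x) * norm w"
proof -
  have "(norm (Ladj x w))\<^sup>2 = inner (blinfun_apply (L x) (Ladj x w)) w"
    using Ladj_adj[of x "Ladj x w" w] by (simp add: power2_norm_eq_inner)
  also have "\<dots> \<le> norm (blinfun_apply (L x) (Ladj x w)) * norm w" by (rule norm_cauchy_schwarz)
  also have "\<dots> \<le> norm (L x) * norm (Ladj x w) * norm w"
    by (simp add: mult_right_mono norm_blinfun)
  finally have "norm (Ladj x w) * norm (Ladj x w) \<le> norm (Ladj x w) * (norm (L x) * norm w)"
    by (simp add: power2_eq_square algebra_simps)
  then show ?thesis
    by (metis mult_le_cancel_left_pos mult_nonneg_nonneg norm_ge_zero order_le_less)
qed

lemma adj_diff: "norm (Ladj x w - Ladj x' w) \<le> norm (L x - L x') * norm w"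
proof -
  have "(norm (Ladj x w - Ladj x' w))\<^sup>2 = inner (blinfun_apply (L x - L x') (Ladj x w - Ladj x' w)) w"
    using Ladj_adj[of x "Ladj x w - Ladj x' w" w] Ladj_adj[of x' "Ladj x w - Ladj x' w" w]
    by (simp add: power2_norm_eq_inner inner_diff_left inner_diff_right blinfun.diff_left)
  also have "\<dots> \<le> norm (blinfun_apply (L x - L x') (Ladj x w - Ladj x' w)) * norm w" by (rule norm_cauchy_schwarz)
  also have "\<dots> \<le> norm (L x - L x') * norm (Ladj x w - Ladj x' w) * norm w"
    by (simp add: mult_right_mono norm_blinfun)
  finally have "norm (Ladj x w - Ladj x' w) * norm (Ladj x w - Ladj x' w) \<le> norm (Ladj x w - Ladj x' w) * (norm (L x - L x') * norm w)"
    by (simp add: power2_eq_square algebra_simps)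
  then show ?thesis
    by (metis mult_le_cancel_left_pos mult_nonneg_nonneg norm_ge_zero order_le_less)
qed

lemma tcc_inner:
  assumes x: "x \<in> B" and d: "norm (yd - y) \<le> d"
  shows "(1 - eta) * (norm (F x - yd))\<^sup>2 - (1 + eta) * d * norm (F x - yd) \<le> inner (Ladj x (F x - yd)) (x - xb)"
proof -
  define r where "r = F x - yd"
  define e where "e = F xb - F x - blinfun_apply (L x) (xb - x)"
  have ne: "norm e \<le> eta * norm (F xb - F x)" unfolding e_def by (rule tcc[OF xb_B x])
  have "norm (F xb - F x) = norm (r + (yd - y))" unfolding r_def xbar_sol by (simp add: norm_minus_commute)
  also have "\<dots> \<le> norm r + d" using norm_triangle_ineq[of r "yd - y"] d by linarith
  finally have ne2: "norm e \<le> eta * (norm r + d)" using ne eta by (meson mult_left_mono order_trans)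
  have Lx: "blinfun_apply (L x) (x - xb) = r + (yd - y) + e"
  proof -
    have "blinfun_apply (L x) (x - xb) = - blinfun_apply (L x) (xb - x)"
      by (metis blinfun.minus_right minus_diff_eq)
    then show ?thesis unfolding e_def r_def xbar_sol by (simp add: algebra_simps)
  qed
  have "inner (Ladj x r) (x - xb) = inner (blinfun_apply (L x) (x - xb)) r"
    using Ladj_adj[of x "x - xb" r] by (simp add: inner_commute)
  also have "\<dots> = (norm r)\<^sup>2 + inner (yd - y) r + inner e r"
    unfolding Lx by (simp add: inner_add_left power2_norm_eq_inner)
  finally have eq: "inner (Ladj x r) (x - xb) = (norm r)\<^sup>2 + inner (yd - y) r + inner e r" .
  have i1: "- (d * norm r) \<le> inner (yd - y) r"
  proof -
    have "\<bar>inner (yd - y) r\<bar> \<le> norm (yd - y) * norm r" by (rule Cauchy_Schwarz_ineq2)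
    also have "\<dots> \<le> d * norm r" using d by (simp add: mult_right_mono)
    finally show ?thesis by linarith
  qed
  have i2: "- (eta * (norm r + d) * norm r) \<le> inner e r"
  proof -
    have "\<bar>inner e r\<bar> \<le> norm e * norm r" by (rule Cauchy_Schwarz_ineq2)
    also have "\<dots> \<le> eta * (norm r + d) * norm r" using ne2 by (simp add: mult_right_mono)
    finally show ?thesis by linarith
  qed
  have "(1 - eta) * (norm r)\<^sup>2 - (1 + eta) * d * norm r = (norm r)\<^sup>2 - d * norm r - eta * (norm r + d) * norm r"
    by (simp add: power2_eq_square algebra_simps)
  then show ?thesis using eq i1 i2 unfolding r_def[symmetric] by linarith
qed

lemma F_lip:
  assumes "x \<in> B" "x' \<in> B"
  shows "(1 - eta) * norm (F x - F x') \<le> Lc * norm (x - x')"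
proof -
  have "norm (F x - F x') \<le> norm (F x - F x' - blinfun_apply (L x') (x - x')) + norm (blinfun_apply (L x') (x - x'))"
    using norm_triangle_ineq[of "F x - F x' - blinfun_apply (L x') (x - x')" "blinfun_apply (L x') (x - x')"] by simp
  also have "\<dots> \<le> eta * norm (F x - F x') + norm (L x') * norm (x - x')"
    using tcc[OF assms] norm_blinfun[of "L x'" "x - x'"] by linarith
  also have "\<dots> \<le> eta * norm (F x - F x') + Lc * norm (x - x')"
    using L_bound[OF assms(2)] by (simp add: mult_right_mono)
  finally show ?thesis by (simp add: algebra_simps)
qed

definition "Amax = max (mu0 / Lc\<^sup>2) mu1"

lemma step_props:
  assumes x: "x \<in> B"
  shows "0 \<le> stepsize ad Lc mu0 mu1 r (Ladj x r)" "stepsize ad Lc mu0 mu1 r (Ladj x r) \<le> Amax"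
    "stepsize ad Lc mu0 mu1 r (Ladj x r) * (norm (Ladj x r))\<^sup>2 \<le> mu0 * (norm r)\<^sup>2"
proof -
  let ?g = "Ladj x r"
  have gn: "norm ?g \<le> Lc * norm r"
    using adj_norm[of x r] L_bound[OF x] by (meson mult_right_mono norm_ge_zero order_trans)
  show "0 \<le> stepsize ad Lc mu0 mu1 r ?g" unfolding stepsize_def using mu0 mu1 by auto
  show "stepsize ad Lc mu0 mu1 r ?g \<le> Amax" unfolding stepsize_def Amax_def using mu0 mu1 by auto
  show "stepsize ad Lc mu0 mu1 r ?g * (norm ?g)\<^sup>2 \<le> mu0 * (norm r)\<^sup>2"
  proof (cases ad)
    case False
    have "(norm ?g)\<^sup>2 \<le> (Lc * norm r)\<^sup>2" using gn by (simp add: power_mono)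
    then have "mu0 / Lc\<^sup>2 * (norm ?g)\<^sup>2 \<le> mu0 / Lc\<^sup>2 * (Lc * norm r)\<^sup>2"
      using mu0 by (intro mult_left_mono) auto
    also have "\<dots> = mu0 * (norm r)\<^sup>2" using Lc_pos by (simp add: power_mult_distrib)
    finally show ?thesis using False unfolding stepsize_def by simp
  next
    case True
    show ?thesis
    proof (cases "r = 0 \<or> ?g = 0")
      case True then show ?thesis using \<open>ad\<close> mu0 unfolding stepsize_def by auto
    next
      case False
      then have "stepsize ad Lc mu0 mu1 r ?g \<le> mu0 * (norm r)\<^sup>2 / (norm ?g)\<^sup>2"
        using \<open>ad\<close> unfolding stepsize_def by simp
      then have "stepsize ad Lc mu0 mu1 r ?g * (norm ?g)\<^sup>2 \<le> mu0 * (norm r)\<^sup>2 / (norm ?g)\<^sup>2 * (norm ?g)\<^sup>2"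
        by (rule mult_right_mono) simp
      then show ?thesis using False by simp
    qed
  qed
qed

end



context Alg begin

definition "c0 = 1 - eta - mu0 / (4 * sig)"

lemma c0_bound: "(1 + eta) / tau < c0" using cond unfolding c0_def by linarith
lemma c0_pos: "c0 > 0" using c0_bound eta tau by (smt (verit) divide_pos_pos)

lemma near_B: assumes "sig * (norm (xb - x))\<^sup>2 \<le> sig * rho\<^sup>2" shows "x \<in> B"
proof -
  have "(norm (xb - x))\<^sup>2 \<le> rho\<^sup>2" using assms sig_pos by simp
  then have a: "norm (xb - x) \<le> rho" using rho_pos by (simp add: power2_le_iff_abs_le)
  have "norm (x0 - x) \<le> norm (x0 - xb) + norm (xb - x)" by (rule norm_diff_triangle_ineq[of x0 xb xb x, simplified])
  also have "\<dots> \<le> 2 * rho" using a xb_near by (simp add: norm_minus_commute)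
  finally show ?thesis by (simp add: dist_norm)
qed

lemma inv:
  assumes d: "0 \<le> d" "norm (yd - y) \<le> d"
  shows "(\<forall>k<n. (1 + eta) * d \<le> c0 * norm (RR d yd k)) \<Longrightarrow>
     XX d yd n \<in> B \<and> Dr (XI d yd n) xb (XX d yd n) \<le> sig * rho\<^sup>2 \<and> inner (MM d yd n) (XX d yd n - xb) \<le> GA d yd n"
proof (induction n)
  case 0
  show ?case unfolding XX_0 XI_0 MM_0 GA_0 using Dr0 rho_pos by simp
next
  case (Suc n)
  let ?x = "XX d yd n" and ?r = "RR d yd n" and ?g = "GG d yd n" and ?al = "AL d yd n"
    and ?be = "BE d yd n" and ?m = "MM d yd n" and ?ga = "GA d yd n" and ?xi = "XI d yd n"
    and ?m' = "MM d yd (Suc n)" and ?x' = "XX d yd (Suc n)" and ?xi' = "XI d yd (Suc n)"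
  have IH: "?x \<in> B" "Dr ?xi xb ?x \<le> sig * rho\<^sup>2" "inner ?m (?x - xb) \<le> ?ga" using Suc by auto
  have Cn: "(1 + eta) * d \<le> c0 * norm ?r" using Suc.prems by auto
  have gdef: "?g = Ladj ?x (F ?x - yd)" unfolding GG_def RR_def ..
  have aldef: "?al = stepsize ad Lc mu0 mu1 (F ?x - yd) (Ladj ?x (F ?x - yd))"
    unfolding AL_def GG_def RR_def ..
  have al0: "0 \<le> ?al" unfolding aldef by (rule step_props(1)[OF IH(1)])
  have alg: "?al * (norm ?g)\<^sup>2 \<le> mu0 * (norm ?r)\<^sup>2" unfolding aldef gdef RR_def by (rule step_props(3)[OF IH(1)])
  have bl: "0 \<le> ?be" "(norm ((- ?al) *\<^sub>R ?g + ?be *\<^sub>R ?m))\<^sup>2 / (4 * sig) + ?be * ?ga \<le> ?al * ?al * (norm ?g)\<^sup>2 / (4 * sig)"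
    using beta_lemma[OF sig_pos less_imp_le[OF bet] BE_def[of d yd n]] by auto
  have T: "(1 - eta) * (norm ?r)\<^sup>2 - (1 + eta) * d * norm ?r \<le> inner ?g (?x - xb)"
    unfolding gdef RR_def by (rule tcc_inner[OF IH(1) d(2)])
  have m': "?m' = (- ?al) *\<^sub>R ?g + ?be *\<^sub>R ?m" by (rule MM_Suc)
  have xi': "?xi' - ?xi = ?m'" unfolding MM_def XP_Suc ..
  have I1: "inner ?m' (?x - xb) = - (?al * inner ?g (?x - xb)) + ?be * inner ?m (?x - xb)"
    unfolding m' by (simp add: inner_add_left inner_diff_left)
  have I2: "?al * ((1 - eta) * (norm ?r)\<^sup>2 - (1 + eta) * d * norm ?r) \<le> ?al * inner ?g (?x - xb)"
    using T al0 by (rule mult_left_mono)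
  have I2': "?al * ((1 - eta) * (norm ?r)\<^sup>2 - (1 + eta) * d * norm ?r) = (1 - eta) * ?al * (norm ?r)\<^sup>2 - (1 + eta) * ?al * d * norm ?r"
    by (simp add: algebra_simps)
  have I3: "?be * inner ?m (?x - xb) \<le> ?be * ?ga" using IH(3) bl(1) by (rule mult_left_mono)
  have GA': "GA d yd (Suc n) = inner ?m' (?x' - ?x) - (1 - eta) * ?al * (norm ?r)\<^sup>2 + (1 + eta) * ?al * d * norm ?r + ?be * ?ga"
    by (rule GA_Suc)
  have I4: "inner ?m' (?x' - xb) = inner ?m' (?x' - ?x) + inner ?m' (?x - xb)"
    by (simp add: inner_diff_right)
  have G: "inner ?m' (?x' - xb) \<le> GA d yd (Suc n)" using I1 I2 I2' I3 GA' I4 by linarith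
  have DS: "Dr ?xi' xb ?x' \<le> Dr ?xi xb ?x + (norm ?m')\<^sup>2 / (4 * sig) + inner ?m' (?x - xb)"
    using Dr_step[OF xb_E, of ?xi' ?xi] unfolding xi' XX_def by simp
  have A1: "?al * (?al * (norm ?g)\<^sup>2) \<le> ?al * (mu0 * (norm ?r)\<^sup>2)" using alg al0 by (rule mult_left_mono)
  have A2: "?al * ?al * (norm ?g)\<^sup>2 / (4 * sig) \<le> ?al * (mu0 * (norm ?r)\<^sup>2) / (4 * sig)"
    using A1 sig_pos by (simp add: divide_right_mono mult.assoc)
  define Q where "Q = ?al * norm ?r * (c0 * norm ?r - (1 + eta) * d)"
  have Q0: "0 \<le> Q" unfolding Q_def using al0 Cn by simp
  have QE: "?al * (mu0 * (norm ?r)\<^sup>2) / (4 * sig) = (1 - eta) * ?al * (norm ?r)\<^sup>2 - (1 + eta) * ?al * d * norm ?r - Q"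
    unfolding Q_def c0_def using sig_pos by (simp add: field_simps power2_eq_square)
  have bl2: "(norm ?m')\<^sup>2 / (4 * sig) + ?be * ?ga \<le> ?al * ?al * (norm ?g)\<^sup>2 / (4 * sig)"
    using bl(2) unfolding m' .
  have D': "Dr ?xi' xb ?x' \<le> sig * rho\<^sup>2" using DS I1 I2 I2' I3 bl2 A2 QE Q0 IH(2) by linarith
  have "sig * (norm (xb - ?x'))\<^sup>2 \<le> sig * rho\<^sup>2"
    using Dr_lower[OF Phi_sub xb_E, of ?xi'] D' unfolding XX_def by linarith
  then have "?x' \<in> B" by (rule near_B)
  then show ?case using D' G by blast
qed

end



lemma conv_bound:
  fixes f :: "nat \<Rightarrow> 'c::real_normed_vector"
  assumes "eventually (\<lambda>l. norm (f l - c) \<le> g l) sequentially" "g \<longlonglongrightarrow> 0"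
  shows "f \<longlonglongrightarrow> c"
proof -
  have "(\<lambda>l. f l - c) \<longlonglongrightarrow> 0" by (rule Lim_null_comparison[OF assms])
  then show ?thesis by (rule LIM_zero_cancel)
qed

lemma norm_conv0:
  fixes X :: "nat \<Rightarrow> 'c::real_normed_vector"
  shows "X \<longlonglongrightarrow> c \<Longrightarrow> (\<lambda>l. norm (X l - c)) \<longlonglongrightarrow> 0"
  using LIM_zero tendsto_norm_zero by blast

context Alg begin

lemma Ladj_diff: "Ladj x (a - b) = Ladj x a - Ladj x b"
proof -
  let ?d = "Ladj x (a - b) - (Ladj x a - Ladj x b)"
  have "inner ?d ?d = inner (blinfun_apply (L x) ?d) (a - b) - inner (blinfun_apply (L x) ?d) a + inner (blinfun_apply (L x) ?d) b"
    using Ladj_adj[of x ?d "a - b"] Ladj_adj[of x ?d a] Ladj_adj[of x ?d b]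
    by (simp add: inner_diff_right inner_commute)
  also have "\<dots> = 0" by (simp add: inner_diff_right)
  finally show ?thesis by simp
qed

lemma inv_exact: "XX 0 y n \<in> B \<and> Dr (XI 0 y n) xb (XX 0 y n) \<le> sig * rho\<^sup>2 \<and> inner (MM 0 y n) (XX 0 y n - xb) \<le> GA 0 y n"
  using inv[of 0 y n] c0_pos by simp

lemma exact_zero: "MM 0 y n = 0 \<Longrightarrow> GA 0 y n = 0"
proof (cases n)
  case 0 then show ?thesis by (simp add: GA_0)
next
  case (Suc k)
  assume m0: "MM 0 y n = 0"
  let ?x = "XX 0 y k" and ?r = "RR 0 y k" and ?g = "GG 0 y k" and ?al = "AL 0 y k"
    and ?be = "BE 0 y k" and ?m = "MM 0 y k" and ?ga = "GA 0 y k"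
  have IH: "?x \<in> B" "inner ?m (?x - xb) \<le> ?ga" using inv_exact[of k] by auto
  have eq: "(- ?al) *\<^sub>R ?g + ?be *\<^sub>R ?m = 0" using m0 MM_Suc[of 0 y k] Suc by simp
  then have eq2: "?al *\<^sub>R ?g = ?be *\<^sub>R ?m" by (simp add: algebra_simps)
  have GA: "GA 0 y n = - ((1 - eta) * ?al * (norm ?r)\<^sup>2) + ?be * ?ga"
    using GA_Suc[of 0 y k] m0 Suc by simp
  have aldef: "?al = stepsize ad Lc mu0 mu1 (F ?x - y) (Ladj ?x (F ?x - y))"
    unfolding AL_def GG_def RR_def ..
  have al0: "0 \<le> ?al" unfolding aldef by (rule step_props(1)[OF IH(1)])
  have be0: "0 \<le> ?be" unfolding BE_def using bet by auto
  have T: "(1 - eta) * (norm ?r)\<^sup>2 \<le> inner ?g (?x - xb)"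
    using tcc_inner[OF IH(1), of y 0] unfolding GG_def RR_def by simp
  have "?al * ((1 - eta) * (norm ?r)\<^sup>2) \<le> ?al * inner ?g (?x - xb)" using T al0 by (rule mult_left_mono)
  also have "\<dots> = inner (?al *\<^sub>R ?g) (?x - xb)" by simp
  also have "\<dots> = ?be * inner ?m (?x - xb)" unfolding eq2 by simp
  also have "\<dots> \<le> ?be * ?ga" using IH(2) be0 by (rule mult_left_mono)
  finally have low: "?al * ((1 - eta) * (norm ?r)\<^sup>2) \<le> ?be * ?ga" .
  have nn: "0 \<le> ?al * ((1 - eta) * (norm ?r)\<^sup>2)" using al0 eta by simp
  have up: "?be * ?ga \<le> 0"
  proof (cases "?be = 0")
    case True then show ?thesis by simp
  next
    case False
    then have bpos: "?be > 0" using be0 by simp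
    have mne: "?m \<noteq> 0" using False unfolding BE_def by auto
    have "?be \<le> max 0 ((?al * inner ?g ?m - 2 * sig * ?ga) / (norm ?m)\<^sup>2)"
      using mne unfolding BE_def by simp
    then have "?be \<le> (?al * inner ?g ?m - 2 * sig * ?ga) / (norm ?m)\<^sup>2" using bpos by linarith
    then have "?be * (norm ?m)\<^sup>2 \<le> ?al * inner ?g ?m - 2 * sig * ?ga" using mne by (simp add: le_divide_eq)
    moreover have "?al * inner ?g ?m = ?be * (norm ?m)\<^sup>2"
    proof -
      have "?al * inner ?g ?m = inner (?al *\<^sub>R ?g) ?m" by simp
      also have "\<dots> = ?be * (norm ?m)\<^sup>2" unfolding eq2 by (simp add: power2_norm_eq_inner)
      finally show ?thesis .
    qed
    ultimately have "2 * sig * ?ga \<le> 0" by linarith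
    then have "?ga \<le> 0" using sig_pos by (simp add: mult_le_0_iff)
    then show ?thesis using bpos by (simp add: mult_le_0_iff)
  qed
  have "(1 - eta) * ?al * (norm ?r)\<^sup>2 = ?al * ((1 - eta) * (norm ?r)\<^sup>2)" by simp
  then show ?thesis using GA low nn up by linarith
qed

end



context Alg begin

lemma step_conv:
  fixes dl :: "nat \<Rightarrow> real" and ydl :: "nat \<Rightarrow> 'b"
  assumes dpos: "\<And>l. 0 \<le> dl l" and dlim: "dl \<longlonglongrightarrow> 0" and noise: "\<And>l. norm (ydl l - y) \<le> dl l"
    and xB: "eventually (\<lambda>l. XX (dl l) (ydl l) n \<in> B) sequentially"
    and cxi: "(\<lambda>l. XI (dl l) (ydl l) n) \<longlonglongrightarrow> XI 0 y n"
    and cxp: "(\<lambda>l. XP (dl l) (ydl l) n) \<longlonglongrightarrow> XP 0 y n"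
    and cga: "(\<lambda>l. GA (dl l) (ydl l) n) \<longlonglongrightarrow> GA 0 y n"
  shows "(\<lambda>l. XI (dl l) (ydl l) (Suc n)) \<longlonglongrightarrow> XI 0 y (Suc n) \<and>
         (\<lambda>l. XP (dl l) (ydl l) (Suc n)) \<longlonglongrightarrow> XP 0 y (Suc n) \<and>
         (\<lambda>l. GA (dl l) (ydl l) (Suc n)) \<longlonglongrightarrow> GA 0 y (Suc n)"
proof -
  define xi where "xi l = XI (dl l) (ydl l) n" for l
  define x where "x l = XX (dl l) (ydl l) n" for l
  define r where "r l = RR (dl l) (ydl l) n" for l
  define g where "g l = GG (dl l) (ydl l) n" for l
  define al where "al l = AL (dl l) (ydl l) n" for l
  define m where "m l = MM (dl l) (ydl l) n" for l
  define be where "be l = BE (dl l) (ydl l) n" for l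
  define ga where "ga l = GA (dl l) (ydl l) n" for l
  define xie where "xie = XI 0 y n"
  define xe where "xe = XX 0 y n"
  define re where "re = RR 0 y n"
  define ge where "ge = GG 0 y n"
  define ae where "ae = AL 0 y n"
  define me where "me = MM 0 y n"
  define bee where "bee = BE 0 y n"
  define gae where "gae = GA 0 y n"
  have xeB: "xe \<in> B" unfolding xe_def using inv_exact by blast
  have cxi': "xi \<longlonglongrightarrow> xie" using cxi unfolding xi_def xie_def .
  have cga': "ga \<longlonglongrightarrow> gae" using cga unfolding ga_def gae_def .
  have xB': "eventually (\<lambda>l. x l \<in> B) sequentially" using xB unfolding x_def .
  have cx: "x \<longlonglongrightarrow> xe"
  proof (rule conv_bound)
    show "eventually (\<lambda>l. norm (x l - xe) \<le> norm (xi l - xie) / (2 * sig)) sequentially"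
      unfolding x_def xe_def XX_def xi_def xie_def using Phi_lip by simp
    show "(\<lambda>l. norm (xi l - xie) / (2 * sig)) \<longlonglongrightarrow> 0"
      using tendsto_divide_zero[OF norm_conv0[OF cxi']] by simp
  qed
  have ydlim: "ydl \<longlonglongrightarrow> y"
    by (rule conv_bound[where g = dl]) (use noise dlim in auto)
  have cr: "r \<longlonglongrightarrow> re"
  proof (rule conv_bound)
    show "eventually (\<lambda>l. norm (r l - re) \<le> Lc / (1 - eta) * norm (x l - xe) + dl l) sequentially"
      using xB'
    proof (rule eventually_mono)
      fix l assume xl: "x l \<in> B"
      have "(1 - eta) * norm (F (x l) - F xe) \<le> Lc * norm (x l - xe)" by (rule F_lip[OF xl xeB])
      then have a: "norm (F (x l) - F xe) \<le> Lc / (1 - eta) * norm (x l - xe)"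
        using eta by (simp add: field_simps)
      have "r l - re = (F (x l) - F xe) - (ydl l - y)"
        unfolding r_def re_def RR_def x_def xe_def by simp
      then have "norm (r l - re) \<le> norm (F (x l) - F xe) + norm (ydl l - y)"
        by (simp add: norm_triangle_ineq4)
      then show "norm (r l - re) \<le> Lc / (1 - eta) * norm (x l - xe) + dl l" using a noise[of l] by linarith
    qed
    show "(\<lambda>l. Lc / (1 - eta) * norm (x l - xe) + dl l) \<longlonglongrightarrow> 0"
      using tendsto_add[OF tendsto_mult_right_zero[OF norm_conv0[OF cx], of "Lc / (1 - eta)"] dlim] by simp
  qed
  have cL: "(\<lambda>l. L (x l)) \<longlonglongrightarrow> L xe"
    using continuous_on_tendsto_compose[OF L_cont cx xeB xB'] by (simp add: o_def)
  have cg: "g \<longlonglongrightarrow> ge"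
  proof (rule conv_bound)
    show "eventually (\<lambda>l. norm (g l - ge) \<le> Lc * norm (r l - re) + norm (L (x l) - L xe) * norm re) sequentially"
      using xB'
    proof (rule eventually_mono)
      fix l assume xl: "x l \<in> B"
      have "g l - ge = Ladj (x l) (r l - re) + (Ladj (x l) re - Ladj xe re)"
        unfolding g_def ge_def GG_def x_def xe_def r_def re_def Ladj_diff by simp
      then have "norm (g l - ge) \<le> norm (Ladj (x l) (r l - re)) + norm (Ladj (x l) re - Ladj xe re)"
        by (simp add: norm_triangle_ineq)
      moreover have "norm (Ladj (x l) (r l - re)) \<le> Lc * norm (r l - re)"
        using adj_norm[of "x l" "r l - re"] L_bound[OF xl] by (meson mult_right_mono norm_ge_zero order_trans)
      moreover have "norm (Ladj (x l) re - Ladj xe re) \<le> norm (L (x l) - L xe) * norm re" by (rule adj_diff)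
      ultimately show "norm (g l - ge) \<le> Lc * norm (r l - re) + norm (L (x l) - L xe) * norm re" by linarith
    qed
    show "(\<lambda>l. Lc * norm (r l - re) + norm (L (x l) - L xe) * norm re) \<longlonglongrightarrow> 0"
      using tendsto_add[OF tendsto_mult_right_zero[OF norm_conv0[OF cr]] tendsto_mult_left_zero[OF norm_conv0[OF cL]]]
      by simp
  qed
  have alb: "eventually (\<lambda>l. 0 \<le> al l \<and> al l \<le> Amax) sequentially"
    using xB'
  proof (rule eventually_mono)
    fix l assume xl: "x l \<in> B"
    have "al l = stepsize ad Lc mu0 mu1 (F (x l) - ydl l) (Ladj (x l) (F (x l) - ydl l))"
      unfolding al_def AL_def GG_def RR_def x_def ..
    then show "0 \<le> al l \<and> al l \<le> Amax" using step_props(1,2)[OF xl] by simp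
  qed
  have Amax0: "0 \<le> Amax" unfolding Amax_def using mu1 by simp
  have P12: "(\<lambda>l. al l *\<^sub>R g l) \<longlonglongrightarrow> ae *\<^sub>R ge \<and> (\<lambda>l. al l * (norm (r l))\<^sup>2) \<longlonglongrightarrow> ae * (norm re)\<^sup>2"
  proof (cases "re = 0")
    case True
    then have ge0: "ge = 0" unfolding ge_def GG_def re_def[symmetric] using Ladj_zero by simp
    have "(\<lambda>l. al l *\<^sub>R g l) \<longlonglongrightarrow> 0"
    proof (rule conv_bound)
      show "eventually (\<lambda>l. norm (al l *\<^sub>R g l - 0) \<le> Amax * norm (g l - ge)) sequentially"
        using alb by eventually_elim (simp add: ge0 mult_right_mono)
      show "(\<lambda>l. Amax * norm (g l - ge)) \<longlonglongrightarrow> 0"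
        using tendsto_mult_right_zero[OF norm_conv0[OF cg]] .
    qed
    moreover have "(\<lambda>l. al l * (norm (r l))\<^sup>2) \<longlonglongrightarrow> 0"
    proof (rule conv_bound)
      show "eventually (\<lambda>l. norm (al l * (norm (r l))\<^sup>2 - 0) \<le> Amax * (norm (r l - re))\<^sup>2) sequentially"
        using alb by eventually_elim (simp add: True mult_right_mono)
      show "(\<lambda>l. Amax * (norm (r l - re))\<^sup>2) \<longlonglongrightarrow> 0"
      proof -
        have "(\<lambda>l. (norm (r l - re))\<^sup>2) \<longlonglongrightarrow> 0" using tendsto_power[OF norm_conv0[OF cr], of 2] by simp
        then show ?thesis by (rule tendsto_mult_right_zero)
      qed
    qed
    ultimately show ?thesis using True ge0 by simp
  next
    case False
    have gne: "ge \<noteq> 0"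
    proof
      assume "ge = 0"
      have "(1 - eta) * (norm re)\<^sup>2 \<le> inner ge (xe - xb)"
        using tcc_inner[OF xeB, of y 0] unfolding ge_def GG_def re_def RR_def xe_def by simp
      then have "(1 - eta) * (norm re)\<^sup>2 \<le> 0" using \<open>ge = 0\<close> by simp
      then show False using False eta by (simp add: mult_le_0_iff)
    qed
    have cal: "al \<longlonglongrightarrow> ae"
    proof (cases ad)
      case False
      then show ?thesis unfolding al_def ae_def AL_def stepsize_def by simp
    next
      case True
      have ev: "eventually (\<lambda>l. r l \<noteq> 0 \<and> g l \<noteq> 0) sequentially"
        using tendsto_imp_eventually_ne[OF cr False] tendsto_imp_eventually_ne[OF cg gne]
        by (simp add: eventually_conj_iff)
      have lim: "(\<lambda>l. min (mu0 * (norm (r l))\<^sup>2 / (norm (g l))\<^sup>2) mu1) \<longlonglongrightarrow> min (mu0 * (norm re)\<^sup>2 / (norm ge)\<^sup>2) mu1"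
        using gne by (intro tendsto_intros cr cg) simp
      have e1: "ae = min (mu0 * (norm re)\<^sup>2 / (norm ge)\<^sup>2) mu1"
        proof -
        have "ae = stepsize ad Lc mu0 mu1 re ge" unfolding ae_def AL_def re_def ge_def ..
        then show ?thesis using True False gne by (simp add: stepsize_def)
      qed
      show ?thesis unfolding e1
      proof (rule Lim_transform_eventually[OF lim])
        show "eventually (\<lambda>l. min (mu0 * (norm (r l))\<^sup>2 / (norm (g l))\<^sup>2) mu1 = al l) sequentially"
      proof -
        have alS: "\<And>l. al l = stepsize ad Lc mu0 mu1 (r l) (g l)" unfolding al_def AL_def r_def g_def ..
        show ?thesis using ev by eventually_elim (simp add: alS stepsize_def True)
      qed
      qed
    qed
    show ?thesis using cal cr cg by (intro conjI tendsto_intros)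
  qed
  have P3: "(\<lambda>l. al l * (dl l * norm (r l))) \<longlonglongrightarrow> 0"
  proof (rule conv_bound)
    show "eventually (\<lambda>l. norm (al l * (dl l * norm (r l)) - 0) \<le> Amax * (dl l * norm (r l))) sequentially"
      using alb by eventually_elim (simp add: abs_mult dpos mult_right_mono)
    show "(\<lambda>l. Amax * (dl l * norm (r l))) \<longlonglongrightarrow> 0"
    proof -
      have "(\<lambda>l. dl l * norm (r l)) \<longlonglongrightarrow> 0 * norm re" by (intro tendsto_intros dlim cr)
      then show ?thesis using tendsto_mult_right_zero[of "\<lambda>l. dl l * norm (r l)" sequentially Amax] by simp
    qed
  qed
  have cm: "m \<longlonglongrightarrow> me"
    unfolding m_def me_def MM_def using cxi cxp by (intro tendsto_intros)
  have beb: "\<And>l. 0 \<le> be l \<and> be l \<le> bet" unfolding be_def BE_def using bet by auto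
  have Q12: "(\<lambda>l. be l *\<^sub>R m l) \<longlonglongrightarrow> bee *\<^sub>R me \<and> (\<lambda>l. be l * ga l) \<longlonglongrightarrow> bee * gae"
  proof (cases "me = 0")
    case True
    have bee0: "bee = 0" unfolding bee_def BE_def using True unfolding me_def by simp
    have gae0: "gae = 0" unfolding gae_def using exact_zero True unfolding me_def by blast
    have "(\<lambda>l. be l *\<^sub>R m l) \<longlonglongrightarrow> 0"
    proof (rule conv_bound)
      show "eventually (\<lambda>l. norm (be l *\<^sub>R m l - 0) \<le> bet * norm (m l - me)) sequentially"
        using beb by (simp add: True mult_right_mono)
      show "(\<lambda>l. bet * norm (m l - me)) \<longlonglongrightarrow> 0" using tendsto_mult_right_zero[OF norm_conv0[OF cm]] .
    qed
    moreover have "(\<lambda>l. be l * ga l) \<longlonglongrightarrow> 0"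
    proof (rule conv_bound)
      show "eventually (\<lambda>l. norm (be l * ga l - 0) \<le> bet * norm (ga l - gae)) sequentially"
        using beb by (simp add: gae0 abs_mult mult_right_mono)
      show "(\<lambda>l. bet * norm (ga l - gae)) \<longlonglongrightarrow> 0" using tendsto_mult_right_zero[OF norm_conv0[OF cga']] .
    qed
    ultimately show ?thesis using bee0 gae0 by simp
  next
    case False
    have ev: "eventually (\<lambda>l. m l \<noteq> 0) sequentially" using tendsto_imp_eventually_ne[OF cm False] .
    have lim: "(\<lambda>l. min (max 0 ((inner (al l *\<^sub>R g l) (m l) - 2 * sig * ga l) / (norm (m l))\<^sup>2)) bet)
        \<longlonglongrightarrow> min (max 0 ((inner (ae *\<^sub>R ge) me - 2 * sig * gae) / (norm me)\<^sup>2)) bet"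
      using False by (intro tendsto_intros P12[THEN conjunct1] cm cga') simp
    have e1: "bee = min (max 0 ((inner (ae *\<^sub>R ge) me - 2 * sig * gae) / (norm me)\<^sup>2)) bet"
      unfolding bee_def BE_def using False unfolding me_def ae_def ge_def gae_def by simp
    have cbe: "be \<longlonglongrightarrow> bee" unfolding e1
    proof (rule Lim_transform_eventually[OF lim])
      show "eventually (\<lambda>l. min (max 0 ((inner (al l *\<^sub>R g l) (m l) - 2 * sig * ga l) / (norm (m l))\<^sup>2)) bet = be l) sequentially"
        using ev by eventually_elim (simp add: be_def BE_def m_def[symmetric] al_def[symmetric] g_def[symmetric] ga_def[symmetric])
    qed
    show ?thesis using cbe cm cga' by (intro conjI tendsto_intros)
  qed
  have xiS: "\<And>l. XI (dl l) (ydl l) (Suc n) = xi l - al l *\<^sub>R g l + be l *\<^sub>R m l"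
    unfolding XI_Suc xi_def al_def g_def be_def m_def ..
  have xieS: "XI 0 y (Suc n) = xie - ae *\<^sub>R ge + bee *\<^sub>R me"
    unfolding XI_Suc xie_def ae_def ge_def bee_def me_def ..
  have c1: "(\<lambda>l. XI (dl l) (ydl l) (Suc n)) \<longlonglongrightarrow> XI 0 y (Suc n)"
    unfolding xiS xieS by (rule tendsto_add[OF tendsto_diff[OF cxi' P12[THEN conjunct1]] Q12[THEN conjunct1]])
  have c2: "(\<lambda>l. XP (dl l) (ydl l) (Suc n)) \<longlonglongrightarrow> XP 0 y (Suc n)"
    unfolding XP_Suc using cxi .
  have gaS: "\<And>d yd. GA d yd (Suc n) = inner (XI d yd (Suc n) - XI d yd n) (Phi (XI d yd (Suc n)) - XX d yd n)
     - (1 - eta) * (AL d yd n * (norm (RR d yd n))\<^sup>2) + (1 + eta) * (AL d yd n * (d * norm (RR d yd n)))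
     + BE d yd n * GA d yd n"
    unfolding GA_Suc MM_def[of _ _ "Suc n"] XP_Suc XX_def[of _ _ "Suc n"] by (simp add: mult.assoc)
  have c3: "(\<lambda>l. GA (dl l) (ydl l) (Suc n)) \<longlonglongrightarrow> GA 0 y (Suc n)"
  proof -
    have cP: "(\<lambda>l. Phi (XI (dl l) (ydl l) (Suc n))) \<longlonglongrightarrow> Phi (XI 0 y (Suc n))"
    proof (rule conv_bound)
      show "eventually (\<lambda>l. norm (Phi (XI (dl l) (ydl l) (Suc n)) - Phi (XI 0 y (Suc n))) \<le>
          norm (XI (dl l) (ydl l) (Suc n) - XI 0 y (Suc n)) / (2 * sig)) sequentially"
        using Phi_lip by simp
      show "(\<lambda>l. norm (XI (dl l) (ydl l) (Suc n) - XI 0 y (Suc n)) / (2 * sig)) \<longlonglongrightarrow> 0"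
        using tendsto_divide_zero[OF norm_conv0[OF c1]] by simp
    qed
    have "(\<lambda>l. inner (XI (dl l) (ydl l) (Suc n) - xi l) (Phi (XI (dl l) (ydl l) (Suc n)) - x l)
        - (1 - eta) * (al l * (norm (r l))\<^sup>2) + (1 + eta) * (al l * (dl l * norm (r l))) + be l * ga l)
      \<longlonglongrightarrow> inner (XI 0 y (Suc n) - xie) (Phi (XI 0 y (Suc n)) - xe)
        - (1 - eta) * (ae * (norm re)\<^sup>2) + (1 + eta) * 0 + bee * gae"
      by (rule tendsto_add[OF tendsto_add[OF tendsto_diff[OF tendsto_inner[OF tendsto_diff[OF c1 cxi'] tendsto_diff[OF cP cx]]
           tendsto_mult[OF tendsto_const P12[THEN conjunct2]]] tendsto_mult[OF tendsto_const P3]] Q12[THEN conjunct2]])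
    moreover have "GA 0 y (Suc n) = inner (XI 0 y (Suc n) - xie) (Phi (XI 0 y (Suc n)) - xe)
        - (1 - eta) * (ae * (norm re)\<^sup>2) + (1 + eta) * 0 + bee * gae"
      unfolding gaS[of 0 y] xie_def xe_def ae_def re_def bee_def gae_def by simp
    moreover have "\<And>l. GA (dl l) (ydl l) (Suc n) = inner (XI (dl l) (ydl l) (Suc n) - xi l) (Phi (XI (dl l) (ydl l) (Suc n)) - x l)
        - (1 - eta) * (al l * (norm (r l))\<^sup>2) + (1 + eta) * (al l * (dl l * norm (r l))) + be l * ga l"
      unfolding gaS xi_def x_def al_def r_def be_def ga_def ..
    ultimately show ?thesis by simp
  qed
  show ?thesis using c1 c2 c3 by blast
qed

end



context Alg begin

lemma all_conv:
  fixes dl :: "nat \<Rightarrow> real" and ydl :: "nat \<Rightarrow> 'b"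
  assumes dpos: "\<And>l. 0 \<le> dl l" and dlim: "dl \<longlonglongrightarrow> 0" and noise: "\<And>l. norm (ydl l - y) \<le> dl l"
    and EV: "eventually (\<lambda>l. \<forall>k<nhat. (1 + eta) * dl l \<le> c0 * norm (RR (dl l) (ydl l) k)) sequentially"
  shows "n \<le> nhat \<Longrightarrow> (\<lambda>l. XI (dl l) (ydl l) n) \<longlonglongrightarrow> XI 0 y n \<and>
         (\<lambda>l. XP (dl l) (ydl l) n) \<longlonglongrightarrow> XP 0 y n \<and>
         (\<lambda>l. GA (dl l) (ydl l) n) \<longlonglongrightarrow> GA 0 y n"
proof (induction n)
  case 0 then show ?case by (simp add: XI_0 XP_0 GA_0)
next
  case (Suc n)
  then have IH: "(\<lambda>l. XI (dl l) (ydl l) n) \<longlonglongrightarrow> XI 0 y n" "(\<lambda>l. XP (dl l) (ydl l) n) \<longlonglongrightarrow> XP 0 y n"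
      "(\<lambda>l. GA (dl l) (ydl l) n) \<longlonglongrightarrow> GA 0 y n" by auto
  have xB: "eventually (\<lambda>l. XX (dl l) (ydl l) n \<in> B) sequentially"
    using EV
  proof (rule eventually_mono)
    fix l assume a: "\<forall>k<nhat. (1 + eta) * dl l \<le> c0 * norm (RR (dl l) (ydl l) k)"
    have "\<forall>k<n. (1 + eta) * dl l \<le> c0 * norm (RR (dl l) (ydl l) k)" using a Suc.prems by auto
    then show "XX (dl l) (ydl l) n \<in> B" using inv[OF dpos noise] by blast
  qed
  show ?case by (rule step_conv[OF dpos dlim noise xB IH])
qed

end

theorem mainTheorem8:
  fixes R :: "'a::{real_inner,complete_space} \<Rightarrow> ereal"
    and F :: "'a \<Rightarrow> 'b::{real_inner,complete_space}"
    and domF :: "'a set"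
    and L :: "'a \<Rightarrow> ('a \<Rightarrow>\<^sub>L 'b)"
    and Ladj :: "'a \<Rightarrow> 'b \<Rightarrow> 'a"
    and y :: 'b and x0 xbar \<xi>0 :: 'a
    and \<sigma> \<rho> \<eta> Lc \<tau> \<mu>0 \<mu>1 \<beta> :: real
    and adaptive :: bool
    and \<delta> :: "nat \<Rightarrow> real" and yd :: "nat \<Rightarrow> 'b"
    and nhat :: nat
  assumes R_proper: "proper_fun R" and R_lsc: "lsc_fun R"
    and sigma_pos: "\<sigma> > 0" and R_sc: "strongly_convex_fun R \<sigma>"
    and rho_pos: "\<rho> > 0" and xi0_sub: "\<xi>0 \<in> subdiff R x0"
    and ball_dom: "cball x0 (2 * \<rho>) \<subseteq> domF"
    and xbar_dom: "xbar \<in> domF" and xbar_sol: "F xbar = y"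
    and xbar_breg: "bregman R \<xi>0 xbar x0 \<le> ereal (\<sigma> * \<rho>\<^sup>2)"
    and F_weakly_closed: "\<And>X x v. (\<forall>n. X n \<in> domF) \<Longrightarrow> weak_conv X x \<Longrightarrow>
              ((\<lambda>n. F (X n)) \<longlongrightarrow> v) sequentially \<Longrightarrow> x \<in> domF \<and> F x = v"
    and L_cont: "continuous_on (cball x0 (2 * \<rho>)) L"
    and Ladj_adj: "\<And>x v w. inner (blinfun_apply (L x) v) w = inner v (Ladj x w)"
    and eta: "0 \<le> \<eta>" "\<eta> < 1"
    and tcc: "\<And>x x'. x \<in> cball x0 (2 * \<rho>) \<Longrightarrow> x' \<in> cball x0 (2 * \<rho>) \<Longrightarrow>
              norm (F x - F x' - blinfun_apply (L x') (x - x')) \<le> \<eta> * norm (F x - F x')"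
    and Lc_pos: "Lc > 0" and L_bound: "\<And>x. x \<in> cball x0 (2 * \<rho>) \<Longrightarrow> norm (L x) \<le> Lc"
    and tau: "\<tau> > 1" and mu0: "\<mu>0 > 0" and mu1: "\<mu>1 > 0" and beta: "\<beta> > 0"
    and cond: "1 - (1 + \<eta>) / \<tau> - \<eta> - \<mu>0 / (4 * \<sigma>) > 0"
    and delta_pos: "\<And>l. \<delta> l > 0" and delta_lim: "\<delta> \<longlonglongrightarrow> 0"
    and noise: "\<And>l. norm (yd l - y) \<le> \<delta> l"
    and nhat: "enat nhat \<le> liminf (\<lambda>l. stop_index R F Ladj \<eta> \<sigma> Lc adaptive \<mu>0 \<mu>1 \<beta> \<tau> (\<delta> l) (yd l) \<xi>0)"
  shows "\<forall>n\<le>nhat.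
     (\<lambda>l. xi_seq R F Ladj \<eta> \<sigma> Lc adaptive \<mu>0 \<mu>1 \<beta> (\<delta> l) (yd l) \<xi>0 n)
        \<longlonglongrightarrow> xi_seq R F Ladj \<eta> \<sigma> Lc adaptive \<mu>0 \<mu>1 \<beta> 0 y \<xi>0 n
   \<and> (\<lambda>l. x_seq R F Ladj \<eta> \<sigma> Lc adaptive \<mu>0 \<mu>1 \<beta> (\<delta> l) (yd l) \<xi>0 n)
        \<longlonglongrightarrow> x_seq R F Ladj \<eta> \<sigma> Lc adaptive \<mu>0 \<mu>1 \<beta> 0 y \<xi>0 n"
proof -
  interpret A: Alg R \<sigma> x0 \<xi>0 F L Ladj \<eta> Lc \<mu>0 \<mu>1 \<beta> \<tau> \<rho> adaptive y xbar
    by unfold_locales (use assms in auto)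
  have xiS: "\<And>d yd n. xi_seq R F Ladj \<eta> \<sigma> Lc adaptive \<mu>0 \<mu>1 \<beta> d yd \<xi>0 n = A.XI d yd n"
    unfolding xi_seq_def A.XI_def A.st_def ..
  have xS: "\<And>d yd n. x_seq R F Ladj \<eta> \<sigma> Lc adaptive \<mu>0 \<mu>1 \<beta> d yd \<xi>0 n = A.XX d yd n"
    unfolding x_seq_def A.XX_def A.Phi_def xiS ..
  define S where "S l = stop_index R F Ladj \<eta> \<sigma> Lc adaptive \<mu>0 \<mu>1 \<beta> \<tau> (\<delta> l) (yd l) \<xi>0" for l
  have EV: "eventually (\<lambda>l. \<forall>k<nhat. (1 + \<eta>) * \<delta> l \<le> A.c0 * norm (A.RR (\<delta> l) (yd l) k)) sequentially"
  proof (cases nhat)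
    case 0 then show ?thesis by simp
  next
    case (Suc n1)
    have "enat n1 < enat nhat" using Suc by simp
    then have "eventually (\<lambda>l. enat n1 < S l) sequentially"
      using nhat le_Liminf_iff[of "enat nhat" sequentially S] unfolding S_def by blast
    then show ?thesis
    proof (rule eventually_mono)
      fix l assume a: "enat n1 < S l"
      show "\<forall>k<nhat. (1 + \<eta>) * \<delta> l \<le> A.c0 * norm (A.RR (\<delta> l) (yd l) k)"
      proof (intro allI impI)
        fix k assume k: "k < nhat"
        let ?P = "\<lambda>n. norm (F (x_seq R F Ladj \<eta> \<sigma> Lc adaptive \<mu>0 \<mu>1 \<beta> (\<delta> l) (yd l) \<xi>0 n) - yd l) \<le> \<tau> * \<delta> l"
        have nP: "\<not> ?P k"
        proof (cases "\<exists>n. ?P n")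
          case True
          then have "S l = enat (LEAST n. ?P n)" unfolding S_def stop_index_def Let_def by simp
          then have "n1 < (LEAST n. ?P n)" using a by simp
          then have "k < (LEAST n. ?P n)" using k Suc by simp
          then show ?thesis by (rule not_less_Least)
        next
          case False then show ?thesis by blast
        qed
        then have gt: "\<tau> * \<delta> l < norm (A.RR (\<delta> l) (yd l) k)"
          unfolding A.RR_def xS by simp
        have "(1 + \<eta>) / \<tau> < A.c0" by (rule A.c0_bound)
        then have "1 + \<eta> < A.c0 * \<tau>" using tau by (simp add: divide_less_eq)
        then have "(1 + \<eta>) * \<delta> l \<le> A.c0 * \<tau> * \<delta> l" using delta_pos[of l] by (simp add: mult_right_mono)
        also have "\<dots> \<le> A.c0 * norm (A.RR (\<delta> l) (yd l) k)"
          using gt A.c0_pos by (simp add: mult.assoc mult_left_mono)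
        finally show "(1 + \<eta>) * \<delta> l \<le> A.c0 * norm (A.RR (\<delta> l) (yd l) k)" .
      qed
    qed
  qed
  have conv: "(\<lambda>l. A.XI (\<delta> l) (yd l) n) \<longlonglongrightarrow> A.XI 0 y n" if "n \<le> nhat" for n
    using A.all_conv[OF less_imp_le[OF delta_pos] delta_lim noise EV that] by blast
  show ?thesis
  proof (intro allI impI conjI)
    fix n assume n: "n \<le> nhat"
    show "(\<lambda>l. xi_seq R F Ladj \<eta> \<sigma> Lc adaptive \<mu>0 \<mu>1 \<beta> (\<delta> l) (yd l) \<xi>0 n)
        \<longlonglongrightarrow> xi_seq R F Ladj \<eta> \<sigma> Lc adaptive \<mu>0 \<mu>1 \<beta> 0 y \<xi>0 n"
      unfolding xiS using conv[OF n] .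
    show "(\<lambda>l. x_seq R F Ladj \<eta> \<sigma> Lc adaptive \<mu>0 \<mu>1 \<beta> (\<delta> l) (yd l) \<xi>0 n)
        \<longlonglongrightarrow> x_seq R F Ladj \<eta> \<sigma> Lc adaptive \<mu>0 \<mu>1 \<beta> 0 y \<xi>0 n"
      unfolding xS A.XX_def
    proof (rule conv_bound)
      show "eventually (\<lambda>l. norm (A.Phi (A.XI (\<delta> l) (yd l) n) - A.Phi (A.XI 0 y n)) \<le>
          norm (A.XI (\<delta> l) (yd l) n - A.XI 0 y n) / (2 * \<sigma>)) sequentially"
        using A.Phi_lip by simp
      show "(\<lambda>l. norm (A.XI (\<delta> l) (yd l) n - A.XI 0 y n) / (2 * \<sigma>)) \<longlonglongrightarrow> 0"
        using tendsto_divide_zero[OF norm_conv0[OF conv[OF n]]] by simp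
    qed
  qed
qed


end
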